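(* Let $(X_t,\mathcal{F}_t,\mathbf{P}_x)$ be a one-dimensional diffusion on the canonical space as in the context whose part on $S$ is a recurrent strong Markov process, and let $A=(a_{i,j})_{1\le i,j\le s}$ be the transition matrix of the Markov chain $(X_{\tau_n},\mathcal{F}_{\tau_n})$ on $\mathtt{D}=\{d_1<\dots<d_s\}$, i.e. $a_{i,j}$ is the probability of moving from $d_i$ to $d_j$. Then $P_{odd}(A^{2n})$ and $P_{even}(A^{2n})$ converge as $n\to\infty$ to stochastic matrices $A_1$ and $A_2$, and there are a $1\times[\frac{s+1}{2}]$ matrix $C_1$ and a $1\times[\frac{s}{2}]$ matrix $C_2$, all of whose components are positive, such that $A_1=(1,\dots,1)'C_1$ and $A_2=(1,\dots,1)'C_2$.
   Context: $S$ is one of $\mathbb{R}$, $[0,\infty)$, $(0,\infty)$; $\Omega=C([0,\infty);S)$, $X_t$ the coordinate process. $\mathtt{D}=\{d_1<\dots<d_s\}\subset S$ finite with $s\ge2$; $\tau_1=\inf\{t\ge0:X_t\in\mathtt{D}\}$, $\tau_{n+1}=\inf\{t\ge\tau_n:X_t\in\mathtt{D}\setminus\{X_{\tau_n}\}\}$. For an $s\times s$ matrix $M=(m_{i,j})$, $P_{odd}(M)$ is the $[\frac{s+1}{2}]\times[\frac{s+1}{2}]$ matrix with entries $(P_{odd}(M))_{i,j}=m_{2i-1,2j-1}$ and $P_{even}(M)$ is the $[\frac{s}{2}]\times[\frac{s}{2}]$ matrix with entries $(P_{even}(M))_{i,j}=m_{2i,2j}$; $[\cdot]$ is the integer part and $'$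 denotes transpose. *)

theory Defs
  imports "HOL-Probability.Probability" "Jordan_Normal_Form.Matrix"
begin

text \<open>Paths are functions real => real; only their values on [0,oo) matter.\<close>

definition paths :: "real set \<Rightarrow> (real \<Rightarrow> real) set" where
  "paths S = {\<omega>. continuous_on {0..} \<omega> \<and> (\<forall>t\<ge>0. \<omega> t \<in> S)}"

definition path_space :: "real set \<Rightarrow> (real \<Rightarrow> real) measure" where
  "path_space S = sigma (paths S)
     {{\<omega> \<in> paths S. \<omega> u \<in> B} | u B. 0 \<le> u \<and> B \<in> sets borel}"

definition nat_filtration :: "real set \<Rightarrow> real \<Rightarrow> (real \<Rightarrow> real) measure" where
  "nat_filtration S t = sigma (paths S)
     {{\<omega> \<in> paths S. \<omega> u \<in> B} | u B. 0 \<le> u \<and> u \<le> t \<and> B \<in> sets borel}"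

definition is_stopping_time :: "real set \<Rightarrow> ((real \<Rightarrow> real) \<Rightarrow> ereal) \<Rightarrow> bool" where
  "is_stopping_time S T \<longleftrightarrow> (\<forall>\<omega>\<in>paths S. 0 \<le> T \<omega>) \<and>
     (\<forall>t\<ge>0. {\<omega> \<in> paths S. T \<omega> \<le> ereal t} \<in> sets (nat_filtration S t))"

definition stopped_sets :: "real set \<Rightarrow> ((real \<Rightarrow> real) \<Rightarrow> ereal) \<Rightarrow> (real \<Rightarrow> real) set set" where
  "stopped_sets S T = {A \<in> sets (path_space S).
     \<forall>t\<ge>0. A \<inter> {\<omega> \<in> paths S. T \<omega> \<le> ereal t} \<in> sets (nat_filtration S t)}"

definition shift :: "(real \<Rightarrow> real) \<Rightarrow> real \<Rightarrow> (real \<Rightarrow> real)" where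
  "shift \<omega> t = (\<lambda>u. \<omega> (t + u))"

text \<open>X_T (only meaningful on {T < oo})\<close>
definition stopped_value :: "((real \<Rightarrow> real) \<Rightarrow> ereal) \<Rightarrow> (real \<Rightarrow> real) \<Rightarrow> real" where
  "stopped_value T \<omega> = \<omega> (real_of_ereal (T \<omega>))"

definition diffusion :: "real set \<Rightarrow> (real \<Rightarrow> (real \<Rightarrow> real) measure) \<Rightarrow> bool" where
  "diffusion S P \<longleftrightarrow>
     (\<forall>x\<in>S. prob_space (P x) \<and> sets (P x) = sets (path_space S)) \<and>
     (\<forall>x\<in>S. AE \<omega> in P x. \<omega> 0 = x) \<and>
     (\<forall>B\<in>sets (path_space S). (\<lambda>x. measure (P x) B) \<in> borel_measurable (restrict_space borel S)) \<and>
     (\<forall>T x A B. is_stopping_time S T \<longrightarrow> x \<in> S \<longrightarrow> A \<in> stopped_sets S T \<longrightarrow>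
        B \<in> sets (path_space S) \<longrightarrow>
        emeasure (P x) {\<omega> \<in> A. T \<omega> < \<infinity> \<and> shift \<omega> (real_of_ereal (T \<omega>)) \<in> B}
        = (\<integral>\<^sup>+ \<omega>. indicator {\<omega> \<in> A. T \<omega> < \<infinity>} \<omega> * emeasure (P (stopped_value T \<omega>)) B \<partial>P x))"

definition recurrent :: "real set \<Rightarrow> (real \<Rightarrow> (real \<Rightarrow> real) measure) \<Rightarrow> bool" where
  "recurrent S P \<longleftrightarrow> (\<forall>x\<in>S. \<forall>y\<in>S. AE \<omega> in P x. \<exists>t\<ge>0. \<omega> t = y)"

section \<open>Successive hitting times of D (1-based: tau D 1 = tau_1; tau D 0 is unused)\<close>

fun tau :: "real set \<Rightarrow> nat \<Rightarrow> (real \<Rightarrow> real) \<Rightarrow> ereal" where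
  "tau D 0 \<omega> = 0"
| "tau D (Suc 0) \<omega> = Inf {ereal t | t. 0 \<le> t \<and> \<omega> t \<in> D}"
| "tau D (Suc (Suc n)) \<omega> =
     Inf {ereal t | t. tau D (Suc n) \<omega> \<le> ereal t \<and> \<omega> t \<in> D - {stopped_value (tau D (Suc n)) \<omega>}}"

text \<open>Transition probability of the embedded chain from d_i to d_j:
  a_{i,j} = P_{d_i}(X_{tau_2} = d_j) (under P_{d_i}, tau_1 = 0).\<close>
definition trans_prob :: "(real \<Rightarrow> (real \<Rightarrow> real) measure) \<Rightarrow> real set \<Rightarrow> real \<Rightarrow> real \<Rightarrow> real" where
  "trans_prob P D x y = measure (P x) {\<omega> \<in> space (P x). tau D 2 \<omega> < \<infinity> \<and> stopped_value (tau D 2) \<omega> = y}"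

section \<open>Matrices (Jordan_Normal_Form, 0-based indices)\<close>

text \<open>P_odd(M)_{i,j} = m_{2i-1,2j-1} and P_even(M)_{i,j} = m_{2i,2j} in 1-based indexing\<close>
definition P_odd :: "'a mat \<Rightarrow> 'a mat" where
  "P_odd M = mat ((dim_row M + 1) div 2) ((dim_row M + 1) div 2) (\<lambda>(i,j). M $$ (2*i, 2*j))"

definition P_even :: "'a mat \<Rightarrow> 'a mat" where
  "P_even M = mat (dim_row M div 2) (dim_row M div 2) (\<lambda>(i,j). M $$ (2*i+1, 2*j+1))"

definition stochastic_mat :: "real mat \<Rightarrow> bool" where
  "stochastic_mat M \<longleftrightarrow> dim_row M = dim_col M \<and>
     (\<forall>i<dim_row M. \<forall>j<dim_col M. 0 \<le> M $$ (i,j)) \<and>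
     (\<forall>i<dim_row M. (\<Sum>j<dim_col M. M $$ (i,j)) = 1)"

definition mat_tendsto :: "(nat \<Rightarrow> real mat) \<Rightarrow> real mat \<Rightarrow> bool" where
  "mat_tendsto Ms L \<longleftrightarrow> (\<forall>n. dim_row (Ms n) = dim_row L \<and> dim_col (Ms n) = dim_col L) \<and>
     (\<forall>i<dim_row L. \<forall>j<dim_col L. (\<lambda>n. Ms n $$ (i,j)) \<longlonglongrightarrow> L $$ (i,j))"

end

theory Submission
  imports Defs
begin

definition first_is :: "real set \<Rightarrow> real \<Rightarrow> (real \<Rightarrow> real) \<Rightarrow> bool" where
  "first_is F a \<omega> \<longleftrightarrow> a \<in> F \<and> (\<exists>\<tau>\<ge>0. \<omega> \<tau> = a \<and> (\<forall>u. 0 \<le> u \<longrightarrow> u < \<tau> \<longrightarrow> \<omega> u \<notin> F))"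

definition firsthit :: "real set \<Rightarrow> (real \<Rightarrow> real) \<Rightarrow> ereal" where
  "firsthit F \<omega> = Inf {ereal t | t. 0 \<le> t \<and> \<omega> t \<in> F}"

definition HitC :: "real set \<Rightarrow> real \<Rightarrow> real \<Rightarrow> real \<Rightarrow> (real \<Rightarrow> real) set" where
  "HitC S c r t = {\<omega> \<in> paths S. \<exists>v. r \<le> v \<and> v \<le> t \<and> \<omega> v = c}"

definition HitO :: "real set \<Rightarrow> real \<Rightarrow> real \<Rightarrow> real \<Rightarrow> (real \<Rightarrow> real) set" where
  "HitO S c r t = {\<omega> \<in> paths S. \<exists>v. r \<le> v \<and> v < t \<and> \<omega> v = c}"

definition FI :: "real set \<Rightarrow> real set \<Rightarrow> real \<Rightarrow> (real \<Rightarrow> real) set" where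
  "FI S F a = {\<omega> \<in> paths S. first_is F a \<omega>}"

lemma paths_cont: "\<omega> \<in> paths S \<Longrightarrow> continuous_on {0..} \<omega>"
  and paths_in: "\<omega> \<in> paths S \<Longrightarrow> 0 \<le> t \<Longrightarrow> \<omega> t \<in> S"
  by (auto simp: paths_def)

lemma firsthit_eq:
  assumes "0 \<le> \<tau>" "\<omega> \<tau> \<in> F" "\<And>u. 0 \<le> u \<Longrightarrow> u < \<tau> \<Longrightarrow> \<omega> u \<notin> F"
  shows "firsthit F \<omega> = ereal \<tau>"
  unfolding firsthit_def
proof (rule antisym)
  show "Inf {ereal t |t. 0 \<le> t \<and> \<omega> t \<in> F} \<le> ereal \<tau>"
    using assms by (intro Inf_lower) auto
  show "ereal \<tau> \<le> Inf {ereal t |t. 0 \<le> t \<and> \<omega> t \<in> F}"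
  proof (rule Inf_greatest)
    fix x assume "x \<in> {ereal t |t. 0 \<le> t \<and> \<omega> t \<in> F}"
    then obtain t where "x = ereal t" "0 \<le> t" "\<omega> t \<in> F" by auto
    then show "ereal \<tau> \<le> x" using assms(3)[of t] by force
  qed
qed

lemma firsthit_inf:
  assumes "\<not> (\<exists>t\<ge>0. \<omega> t \<in> F)"
  shows "firsthit F \<omega> = \<infinity>"
proof -
  have e: "{ereal t | t. 0 \<le> t \<and> \<omega> t \<in> F} = {}" using assms by auto
  show ?thesis unfolding firsthit_def e by (simp add: top_ereal_def)
qed

lemma firsthit_nonneg: "0 \<le> firsthit F \<omega>"
  unfolding firsthit_def by (rule Inf_greatest) auto

lemma exists_first:
  assumes "\<omega> \<in> paths S" "closed F" "0 \<le> t0" "\<omega> t0 \<in> F"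
  shows "\<exists>\<tau>. 0 \<le> \<tau> \<and> \<tau> \<le> t0 \<and> \<omega> \<tau> \<in> F \<and> (\<forall>u. 0 \<le> u \<longrightarrow> u < \<tau> \<longrightarrow> \<omega> u \<notin> F)"
proof -
  define Z where "Z = {0..} \<inter> \<omega> -` F"
  have cl: "closed Z" unfolding Z_def
    using continuous_closed_preimage[OF paths_cont[OF assms(1)] closed_atLeast assms(2)] .
  have ne: "Z \<noteq> {}" using assms unfolding Z_def by auto
  have bdd: "bdd_below Z" unfolding Z_def by (auto intro: bdd_belowI[of _ 0])
  have inZ: "Inf Z \<in> Z" using closed_contains_Inf[OF ne bdd cl] .
  have le: "Inf Z \<le> u" if "u \<in> Z" for u using cInf_lower[OF that bdd] .
  show ?thesis
  proof (intro exI[of _ "Inf Z"] conjI allI impI)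
    show "0 \<le> Inf Z" using inZ unfolding Z_def by auto
    show "Inf Z \<le> t0" using le[of t0] assms unfolding Z_def by auto
    show "\<omega> (Inf Z) \<in> F" using inZ unfolding Z_def by auto
    fix u assume u: "0 \<le> u" "u < Inf Z"
    show "\<omega> u \<notin> F"
    proof
      assume "\<omega> u \<in> F"
      then have "u \<in> Z" using u unfolding Z_def by auto
      then have "Inf Z \<le> u" by (rule le)
      then show False using u by simp
    qed
  qed
qed

lemma first_is_unique:
  assumes "first_is F a \<omega>" "first_is F b \<omega>"
  shows "a = b"
proof -
  obtain t1 where t1: "0 \<le> t1" "\<omega> t1 = a" "\<forall>u. 0 \<le> u \<longrightarrow> u < t1 \<longrightarrow> \<omega> u \<notin> F" "a \<in> F"
    using assms(1) unfolding first_is_def by auto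
  obtain t2 where t2: "0 \<le> t2" "\<omega> t2 = b" "\<forall>u. 0 \<le> u \<longrightarrow> u < t2 \<longrightarrow> \<omega> u \<notin> F" "b \<in> F"
    using assms(2) unfolding first_is_def by auto
  have "\<not> t1 < t2" using t1 t2 by auto
  moreover have "\<not> t2 < t1" using t1 t2 by auto
  ultimately have "t1 = t2" by simp
  then show ?thesis using t1 t2 by simp
qed

lemma fh_iff:
  assumes "\<omega> \<in> paths S" "closed F"
  shows "(firsthit F \<omega> < \<infinity> \<and> \<omega> (real_of_ereal (firsthit F \<omega>)) = y) \<longleftrightarrow> first_is F y \<omega>"
proof
  assume "first_is F y \<omega>"
  then obtain \<tau> where "0 \<le> \<tau>" "\<omega> \<tau> = y" "\<forall>u. 0 \<le> u \<longrightarrow> u < \<tau> \<longrightarrow> \<omega> u \<notin> F" "y \<in> F"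
    unfolding first_is_def by auto
  then have "firsthit F \<omega> = ereal \<tau>" by (intro firsthit_eq) auto
  then show "firsthit F \<omega> < \<infinity> \<and> \<omega> (real_of_ereal (firsthit F \<omega>)) = y" using \<open>\<omega> \<tau> = y\<close> by simp
next
  assume a: "firsthit F \<omega> < \<infinity> \<and> \<omega> (real_of_ereal (firsthit F \<omega>)) = y"
  have "\<exists>t\<ge>0. \<omega> t \<in> F"
  proof (rule ccontr)
    assume "\<not> (\<exists>t\<ge>0. \<omega> t \<in> F)"
    then have "firsthit F \<omega> = \<infinity>" by (rule firsthit_inf)
    then show False using a by simp
  qed
  then obtain t where "0 \<le> t" "\<omega> t \<in> F" by blast
  then obtain \<tau> where \<tau>: "0 \<le> \<tau>" "\<omega> \<tau> \<in> F" "\<forall>u. 0 \<le> u \<longrightarrow> u < \<tau> \<longrightarrow> \<omega> u \<notin> F"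
    using exists_first[OF assms] by blast
  then have "firsthit F \<omega> = ereal \<tau>" by (intro firsthit_eq) auto
  then show "first_is F y \<omega>" using a \<tau> unfolding first_is_def by auto
qed

lemma tau1: "tau D (Suc 0) \<omega> = firsthit D \<omega>"
  by (simp add: firsthit_def)

lemma E_char:
  assumes "\<omega> \<in> paths S" "finite D"
  shows "(tau D 2 \<omega> < \<infinity> \<and> stopped_value (tau D 2) \<omega> = y) \<longleftrightarrow>
         (\<exists>a. first_is D a \<omega> \<and> first_is (D - {a}) y \<omega>)"
proof (cases "\<exists>t\<ge>0. \<omega> t \<in> D")
  case True
  then obtain t0 where "0 \<le> t0" "\<omega> t0 \<in> D" by auto
  then obtain \<tau> where \<tau>: "0 \<le> \<tau>" "\<omega> \<tau> \<in> D" "\<forall>u. 0 \<le> u \<longrightarrow> u < \<tau> \<longrightarrow> \<omega> u \<notin> D"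
    using exists_first[OF assms(1) finite_imp_closed[OF assms(2)]] by blast
  define a where "a = \<omega> \<tau>"
  have cl: "closed (D - {a})" using assms(2) by (intro finite_imp_closed) auto
  have fa: "first_is D a \<omega>" unfolding first_is_def a_def using \<tau> by auto
  have t1: "tau D (Suc 0) \<omega> = ereal \<tau>" unfolding tau1 using \<tau> by (intro firsthit_eq) auto
  have sv: "stopped_value (tau D (Suc 0)) \<omega> = a" unfolding stopped_value_def t1 a_def by simp
  have "tau D 2 \<omega> = Inf {ereal t |t. tau D (Suc 0) \<omega> \<le> ereal t \<and> \<omega> t \<in> D - {stopped_value (tau D (Suc 0)) \<omega>}}"
    by (simp only: numeral_2_eq_2 tau.simps)
  also have "\<dots> = Inf {ereal t |t. ereal \<tau> \<le> ereal t \<and> \<omega> t \<in> D - {a}}"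
    by (simp only: t1 sv)
  also have "{ereal t |t. ereal \<tau> \<le> ereal t \<and> \<omega> t \<in> D - {a}} = {ereal t |t. 0 \<le> t \<and> \<omega> t \<in> D - {a}}"
  proof -
    have "(ereal \<tau> \<le> ereal t \<and> \<omega> t \<in> D - {a}) \<longleftrightarrow> (0 \<le> t \<and> \<omega> t \<in> D - {a})" for t
    proof
      assume "ereal \<tau> \<le> ereal t \<and> \<omega> t \<in> D - {a}"
      then show "0 \<le> t \<and> \<omega> t \<in> D - {a}" using \<tau>(1) by simp
    next
      assume h: "0 \<le> t \<and> \<omega> t \<in> D - {a}"
      then have "\<not> t < \<tau>" using \<tau>(3) by blast
      then show "ereal \<tau> \<le> ereal t \<and> \<omega> t \<in> D - {a}" using h by simp
    qed
    then show ?thesis by simp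
  qed
  finally have t2: "tau D 2 \<omega> = firsthit (D - {a}) \<omega>" unfolding firsthit_def .
  have "(tau D 2 \<omega> < \<infinity> \<and> stopped_value (tau D 2) \<omega> = y) \<longleftrightarrow> first_is (D - {a}) y \<omega>"
    unfolding stopped_value_def t2
    using fh_iff[OF assms(1) cl, of y] by simp
  also have "\<dots> \<longleftrightarrow> (\<exists>a. first_is D a \<omega> \<and> first_is (D - {a}) y \<omega>)"
  proof
    assume "first_is (D - {a}) y \<omega>"
    then show "\<exists>a. first_is D a \<omega> \<and> first_is (D - {a}) y \<omega>" using fa by blast
  next
    assume "\<exists>a. first_is D a \<omega> \<and> first_is (D - {a}) y \<omega>"
    then obtain a' where a': "first_is D a' \<omega>" "first_is (D - {a'}) y \<omega>" by blast
    have "a' = a" using first_is_unique[OF a'(1) fa] .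
    then show "first_is (D - {a}) y \<omega>" using a'(2) by simp
  qed
  finally show ?thesis .
next
  case False
  have t1: "tau D (Suc 0) \<omega> = \<infinity>" unfolding tau1 using False by (rule firsthit_inf)
  have "tau D 2 \<omega> = Inf {ereal t |t. tau D (Suc 0) \<omega> \<le> ereal t \<and> \<omega> t \<in> D - {stopped_value (tau D (Suc 0)) \<omega>}}"
    by (simp only: numeral_2_eq_2 tau.simps)
  also have "{ereal t |t. tau D (Suc 0) \<omega> \<le> ereal t \<and> \<omega> t \<in> D - {stopped_value (tau D (Suc 0)) \<omega>}} = {}"
    unfolding t1 by auto
  finally have "tau D 2 \<omega> = \<infinity>" by (simp add: top_ereal_def)
  moreover have "\<not> first_is D a \<omega>" for a using False unfolding first_is_def by auto
  ultimately show ?thesis by simp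
qed

lemma gens_sub: "{{\<omega> \<in> paths S. \<omega> u \<in> B} | u B. P u B} \<subseteq> Pow (paths S)"
  by auto

lemma space_ps: "space (path_space S) = paths S"
  unfolding path_space_def by (simp add: space_measure_of_conv)

lemma sets_ps: "sets (path_space S) = sigma_sets (paths S) {{\<omega> \<in> paths S. \<omega> u \<in> B} | u B. 0 \<le> u \<and> B \<in> sets borel}"
  unfolding path_space_def by (rule sets_measure_of) auto

lemma space_nf: "space (nat_filtration S t) = paths S"
  unfolding nat_filtration_def by (simp add: space_measure_of_conv)

lemma sets_nf: "sets (nat_filtration S t) = sigma_sets (paths S) {{\<omega> \<in> paths S. \<omega> u \<in> B} | u B. 0 \<le> u \<and> u \<le> t \<and> B \<in> sets borel}"
  unfolding nat_filtration_def by (rule sets_measure_of) auto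

lemma nf_sub: "sets (nat_filtration S t) \<subseteq> sets (path_space S)"
  unfolding sets_nf sets_ps by (rule sigma_sets_mono') auto

lemma nf_mono: "t \<le> t' \<Longrightarrow> sets (nat_filtration S t) \<subseteq> sets (nat_filtration S t')"
  unfolding sets_nf by (rule sigma_sets_mono') fastforce

lemma coord_meas:
  assumes "0 \<le> u" "u \<le> t" "B \<in> sets borel"
  shows "{\<omega> \<in> paths S. \<omega> u \<in> B} \<in> sets (nat_filtration S t)"
proof -
  have "{\<omega> \<in> paths S. \<omega> u \<in> B} \<in> {{\<omega> \<in> paths S. \<omega> u \<in> B} | u B. 0 \<le> u \<and> u \<le> t \<and> B \<in> sets borel}"
    using assms by blast
  then have "{\<omega> \<in> paths S. \<omega> u \<in> B} \<in> sigma_sets (paths S) {{\<omega> \<in> paths S. \<omega> u \<in> B} | u B. 0 \<le> u \<and> u \<le> t \<and> B \<in> sets borel}"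
    by (rule sigma_sets.Basic)
  then show ?thesis by (simp only: sets_nf)
qed

lemma HitC_meas:
  assumes r: "0 \<le> r"
  shows "HitC S c r t \<in> sets (nat_filtration S t)"
proof (cases "r \<le> t")
  case False
  then have "HitC S c r t = {}" unfolding HitC_def by auto
  then show ?thesis by simp
next
  case True
  define Qs where "Qs = {r, t} \<union> (\<rat> \<inter> {r..t})"
  have cQ: "countable Qs" unfolding Qs_def using countable_rat by (auto intro: countable_Int1)
  have Qs_in: "q \<in> Qs \<Longrightarrow> r \<le> q \<and> q \<le> t" for q unfolding Qs_def using True by auto
  have eq: "HitC S c r t = (\<Inter>k. \<Union>q\<in>Qs. {\<omega> \<in> paths S. \<omega> q \<in> ball c (1 / real (Suc k))})"
  proof (intro equalityI subsetI)
    fix \<omega> assume "\<omega> \<in> HitC S c r t"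
    then obtain v where v: "\<omega> \<in> paths S" "r \<le> v" "v \<le> t" "\<omega> v = c" unfolding HitC_def by auto
    have cont: "continuous_on {r..t} \<omega>"
      using r by (intro continuous_on_subset[OF paths_cont[OF v(1)]]) auto
    show "\<omega> \<in> (\<Inter>k. \<Union>q\<in>Qs. {\<omega> \<in> paths S. \<omega> q \<in> ball c (1 / real (Suc k))})"
    proof (rule INT_I)
      fix k :: nat assume "k \<in> UNIV"
      have e: "0 < 1 / real (Suc k)" by simp
      obtain d where d: "0 < d" "\<forall>x'\<in>{r..t}. dist x' v < d \<longrightarrow> dist (\<omega> x') (\<omega> v) < 1 / real (Suc k)"
        using cont v e unfolding continuous_on_iff by (metis atLeastAtMost_iff)
      obtain q where q: "q \<in> Qs" "dist q v < d"
      proof (cases "v = t")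
        case True then show ?thesis using that[of t] d Qs_def by auto
      next
        case False
        then have "v < min (v + d) t" using v d by auto
        then obtain q where "q \<in> \<rat>" "v < q" "q < min (v + d) t" using Rats_dense_in_real by blast
        then show ?thesis using that[of q] v unfolding Qs_def by (auto simp: dist_real_def)
      qed
      have "dist (\<omega> q) c < 1 / real (Suc k)" using d(2) q Qs_in[OF q(1)] v by auto
      then show "\<omega> \<in> (\<Union>q\<in>Qs. {\<omega> \<in> paths S. \<omega> q \<in> ball c (1 / real (Suc k))})"
        using q v by (auto simp: dist_commute)
    qed
  next
    fix \<omega> assume a: "\<omega> \<in> (\<Inter>k. \<Union>q\<in>Qs. {\<omega> \<in> paths S. \<omega> q \<in> ball c (1 / real (Suc k))})"
    then have p: "\<omega> \<in> paths S" by auto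
    show "\<omega> \<in> HitC S c r t"
    proof (rule ccontr)
      assume nh: "\<omega> \<notin> HitC S c r t"
      have cont: "continuous_on {r..t} (\<lambda>v. dist (\<omega> v) c)"
        using paths_cont[OF p] r
        by (intro continuous_on_dist continuous_on_const) (auto intro: continuous_on_subset)
      obtain v0 where v0: "v0 \<in> {r..t}" "\<forall>v\<in>{r..t}. dist (\<omega> v0) c \<le> dist (\<omega> v) c"
        using continuous_attains_inf[OF compact_Icc _ cont] True by auto
      have "\<omega> v0 \<noteq> c" using nh v0 p unfolding HitC_def by auto
      then have "0 < dist (\<omega> v0) c" by simp
      then obtain k where k: "inverse (real (Suc k)) < dist (\<omega> v0) c" using reals_Archimedean by blast
      obtain q where q: "q \<in> Qs" "dist c (\<omega> q) < 1 / real (Suc k)" using a by fastforce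
      show False using v0(2)[rule_format, of q] Qs_in[OF q(1)] q(2) k
        by (auto simp: dist_commute inverse_eq_divide)
    qed
  qed
  have mem: "{\<omega> \<in> paths S. \<omega> q \<in> ball c e} \<in> sets (nat_filtration S t)" if "q \<in> Qs" for q e
    using Qs_in[OF that] r by (intro coord_meas borel_open open_ball) auto
  have un: "(\<Union>q\<in>Qs. {\<omega> \<in> paths S. \<omega> q \<in> ball c (1 / real (Suc k))}) \<in> sets (nat_filtration S t)" for k
    by (rule sets.countable_UN''[OF cQ mem])
  have "(\<Inter>k. \<Union>q\<in>Qs. {\<omega> \<in> paths S. \<omega> q \<in> ball c (1 / real (Suc k))}) \<in> sets (nat_filtration S t)"
    using un by (intro sets.countable_INT') (auto simp del: mem_ball)
  then show ?thesis using eq by simp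
qed

lemma HitC_meas': "0 \<le> r \<Longrightarrow> HitC S c r t \<in> sets (path_space S)"
  using HitC_meas nf_sub by blast

lemma HitO_eq: "HitO S c r t = (\<Union>n. HitC S c r (t - 1 / real (Suc n)))"
proof (intro equalityI subsetI)
  fix \<omega> assume "\<omega> \<in> HitO S c r t"
  then obtain v where v: "\<omega> \<in> paths S" "r \<le> v" "v < t" "\<omega> v = c" unfolding HitO_def by auto
  then have "0 < t - v" by simp
  then obtain n where "inverse (real (Suc n)) < t - v" using reals_Archimedean by blast
  then show "\<omega> \<in> (\<Union>n. HitC S c r (t - 1 / real (Suc n)))"
    using v unfolding HitC_def by (auto simp: inverse_eq_divide intro!: exI[of _ n] exI[of _ v])
next
  fix \<omega> assume "\<omega> \<in> (\<Union>n. HitC S c r (t - 1 / real (Suc n)))"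
  then obtain n v where "\<omega> \<in> paths S" "r \<le> v" "v \<le> t - 1 / real (Suc n)" "\<omega> v = c"
    unfolding HitC_def by auto
  moreover have "0 < 1 / real (Suc n)" by simp
  ultimately have "v < t" by linarith
  then show "\<omega> \<in> HitO S c r t" unfolding HitO_def using \<open>\<omega> \<in> paths S\<close> \<open>r \<le> v\<close> \<open>\<omega> v = c\<close> by auto
qed

lemma HitO_meas: "0 \<le> r \<Longrightarrow> HitO S c r t \<in> sets (path_space S)"
  unfolding HitO_eq by (intro sets.countable_UN'') (auto intro!: HitC_meas')

lemma FI_meas:
  assumes F: "finite F"
  shows "FI S F a \<in> sets (path_space S)"
proof (cases "a \<in> F")
  case False
  then have "FI S F a = {}" unfolding FI_def first_is_def by auto
  then show ?thesis by simp
next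
  case aF: True
  define G where "G = F - {a}"
  have clG: "closed G" unfolding G_def using F by (intro finite_imp_closed) auto
  have eq: "FI S F a = (\<Union>q\<in>\<rat> \<inter> {0..}. HitC S a 0 q - (\<Union>b\<in>G. HitC S b 0 q))"
  proof (intro equalityI subsetI)
    fix \<omega> assume "\<omega> \<in> FI S F a"
    then obtain \<tau> where p: "\<omega> \<in> paths S" and \<tau>: "0 \<le> \<tau>" "\<omega> \<tau> = a" "\<forall>u. 0 \<le> u \<longrightarrow> u < \<tau> \<longrightarrow> \<omega> u \<notin> F"
      unfolding FI_def first_is_def by auto
    obtain q where q: "q \<in> \<rat>" "\<tau> < q" "\<forall>v. 0 \<le> v \<longrightarrow> v \<le> q \<longrightarrow> \<omega> v \<notin> G"
    proof (cases "\<exists>t\<ge>0. \<omega> t \<in> G")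
      case True
      then obtain t0 where "0 \<le> t0" "\<omega> t0 \<in> G" by auto
      then obtain \<sigma> where \<sigma>: "0 \<le> \<sigma>" "\<omega> \<sigma> \<in> G" "\<forall>u. 0 \<le> u \<longrightarrow> u < \<sigma> \<longrightarrow> \<omega> u \<notin> G"
        using exists_first[OF p clG] by blast
      have "\<not> \<sigma> < \<tau>" using \<tau> \<sigma> unfolding G_def by auto
      moreover have "\<sigma> \<noteq> \<tau>" using \<tau> \<sigma> unfolding G_def by auto
      ultimately have "\<tau> < \<sigma>" by simp
      then obtain q where "q \<in> \<rat>" "\<tau> < q" "q < \<sigma>" using Rats_dense_in_real by blast
      then show ?thesis using that[of q] \<sigma> by auto
    next
      case False
      obtain q where "q \<in> \<rat>" "\<tau> < q" "q < \<tau> + 1" using Rats_dense_in_real[of \<tau> "\<tau> + 1"] by auto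
      then show ?thesis using that[of q] False by auto
    qed
    have "\<omega> \<in> HitC S a 0 q" unfolding HitC_def using p \<tau> q by auto
    moreover have "\<omega> \<notin> HitC S b 0 q" if "b \<in> G" for b
      unfolding HitC_def using q that by auto
    ultimately show "\<omega> \<in> (\<Union>q\<in>\<rat> \<inter> {0..}. HitC S a 0 q - (\<Union>b\<in>G. HitC S b 0 q))"
      using q \<tau> by auto
  next
    fix \<omega> assume "\<omega> \<in> (\<Union>q\<in>\<rat> \<inter> {0..}. HitC S a 0 q - (\<Union>b\<in>G. HitC S b 0 q))"
    then obtain q v where q: "0 \<le> q" "\<omega> \<in> paths S" "0 \<le> v" "v \<le> q" "\<omega> v = a"
      and nG: "\<And>b. b \<in> G \<Longrightarrow> \<omega> \<notin> HitC S b 0 q"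
      unfolding HitC_def by blast
    obtain \<tau> where \<tau>: "0 \<le> \<tau>" "\<tau> \<le> v" "\<omega> \<tau> \<in> F" "\<forall>u. 0 \<le> u \<longrightarrow> u < \<tau> \<longrightarrow> \<omega> u \<notin> F"
      using exists_first[OF q(2) finite_imp_closed[OF F] q(3)] q(5) aF by blast
    have "\<omega> \<tau> \<notin> G"
    proof
      assume "\<omega> \<tau> \<in> G"
      moreover have "\<omega> \<in> HitC S (\<omega> \<tau>) 0 q" unfolding HitC_def using q \<tau> by auto
      ultimately show False using nG by blast
    qed
    then have "\<omega> \<tau> = a" using \<tau>(3) unfolding G_def by auto
    then show "\<omega> \<in> FI S F a" unfolding FI_def first_is_def using q \<tau> aF by auto
  qed
  have "(\<Union>q\<in>\<rat> \<inter> {0..}. HitC S a 0 q - (\<Union>b\<in>G. HitC S b 0 q)) \<in> sets (path_space S)"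
    using F countable_rat unfolding G_def
    by (intro sets.countable_UN'') (auto intro: countable_Int1 intro!: sets.Diff sets.finite_UN HitC_meas')
  then show ?thesis using eq by simp
qed

lemma diff_basic:
  assumes "diffusion S P" "x \<in> S"
  shows "prob_space (P x)" "sets (P x) = sets (path_space S)" "space (P x) = paths S"
    "AE \<omega> in P x. \<omega> 0 = x"
proof -
  show "prob_space (P x)" "sets (P x) = sets (path_space S)" "AE \<omega> in P x. \<omega> 0 = x"
    using assms unfolding diffusion_def by auto
  then show "space (P x) = paths S" using sets_eq_imp_space_eq space_ps by metis
qed

lemma fh_fin:
  assumes "\<omega> \<in> paths S" "firsthit {c} \<omega> < \<infinity>"
  shows "\<exists>\<tau>. firsthit {c} \<omega> = ereal \<tau> \<and> 0 \<le> \<tau> \<and> \<omega> \<tau> = c \<and> (\<forall>u. 0 \<le> u \<longrightarrow> u < \<tau> \<longrightarrow> \<omega> u \<noteq> c)"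
proof -
  have "\<exists>t\<ge>0. \<omega> t \<in> {c}"
  proof (rule ccontr)
    assume "\<not> (\<exists>t\<ge>0. \<omega> t \<in> {c})"
    then have "firsthit {c} \<omega> = \<infinity>" by (rule firsthit_inf)
    then show False using assms(2) by simp
  qed
  then obtain t where "0 \<le> t" "\<omega> t \<in> {c}" by blast
  then obtain \<tau> where \<tau>: "0 \<le> \<tau>" "\<omega> \<tau> \<in> {c}" "\<forall>u. 0 \<le> u \<longrightarrow> u < \<tau> \<longrightarrow> \<omega> u \<notin> {c}"
    using exists_first[OF assms(1)] by blast
  then have "firsthit {c} \<omega> = ereal \<tau>" by (intro firsthit_eq) auto
  then show ?thesis using \<tau> by auto
qed

lemma HitC_fh: "HitC S c 0 t = {\<omega> \<in> paths S. firsthit {c} \<omega> \<le> ereal t}"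
proof (intro equalityI subsetI)
  fix \<omega> assume "\<omega> \<in> HitC S c 0 t"
  then obtain v where v: "\<omega> \<in> paths S" "0 \<le> v" "v \<le> t" "\<omega> v = c" unfolding HitC_def by auto
  have "firsthit {c} \<omega> \<le> ereal v" unfolding firsthit_def using v by (intro Inf_lower) auto
  then show "\<omega> \<in> {\<omega> \<in> paths S. firsthit {c} \<omega> \<le> ereal t}" using v by (auto intro: order_trans)
next
  fix \<omega> assume a: "\<omega> \<in> {\<omega> \<in> paths S. firsthit {c} \<omega> \<le> ereal t}"
  then have "firsthit {c} \<omega> < \<infinity>" by (auto intro: le_less_trans)
  then obtain \<tau> where "firsthit {c} \<omega> = ereal \<tau>" "0 \<le> \<tau>" "\<omega> \<tau> = c"
    using fh_fin a by blast
  then show "\<omega> \<in> HitC S c 0 t" using a unfolding HitC_def by auto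
qed

lemma stop_fh: "is_stopping_time S (firsthit {c})"
  unfolding is_stopping_time_def
  using HitC_meas[of 0 S c] by (auto simp: firsthit_nonneg HitC_fh)

lemma fin_eq: "{\<omega> \<in> paths S. firsthit {c} \<omega> < \<infinity>} = (\<Union>n. HitC S c 0 (real n))"
proof (intro equalityI subsetI)
  fix \<omega> assume a: "\<omega> \<in> {\<omega> \<in> paths S. firsthit {c} \<omega> < \<infinity>}"
  then obtain \<tau> where "firsthit {c} \<omega> = ereal \<tau>" using fh_fin by blast
  moreover obtain n where "\<tau> \<le> real n" using real_arch_simple by blast
  ultimately show "\<omega> \<in> (\<Union>n. HitC S c 0 (real n))" using a unfolding HitC_fh by auto
next
  fix \<omega> assume "\<omega> \<in> (\<Union>n. HitC S c 0 (real n))"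
  then show "\<omega> \<in> {\<omega> \<in> paths S. firsthit {c} \<omega> < \<infinity>}" unfolding HitC_fh
    by (auto intro: le_less_trans)
qed

lemma fin_meas: "{\<omega> \<in> paths S. firsthit {c} \<omega> < \<infinity>} \<in> sets (path_space S)"
  unfolding fin_eq by (intro sets.countable_UN'' HitC_meas') auto

lemma ss_all: "paths S \<in> stopped_sets S (firsthit {c})"
  unfolding stopped_sets_def
proof (intro CollectI conjI allI impI)
  show "paths S \<in> sets (path_space S)" using sets.top[of "path_space S"] space_ps by simp
  fix t :: real assume "0 \<le> t"
  have "paths S \<inter> {\<omega> \<in> paths S. firsthit {c} \<omega> \<le> ereal t} = HitC S c 0 t"
    unfolding HitC_fh by auto
  then show "paths S \<inter> {\<omega> \<in> paths S. firsthit {c} \<omega> \<le> ereal t} \<in> sets (nat_filtration S t)"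
    using HitC_meas[of 0 S c t] by simp
qed

lemma ss_HitC: "0 \<le> h \<Longrightarrow> HitC S c 0 h \<in> stopped_sets S (firsthit {c})"
  unfolding stopped_sets_def
proof (intro CollectI conjI allI impI)
  show "HitC S c 0 h \<in> sets (path_space S)" by (rule HitC_meas') simp
  fix t :: real assume "0 \<le> t"
  have "HitC S c 0 h \<inter> {\<omega> \<in> paths S. firsthit {c} \<omega> \<le> ereal t} = HitC S c 0 (min h t)"
  proof -
    have e: "ereal (min h t) = min (ereal h) (ereal t)" by (simp add: min_def)
    show ?thesis unfolding HitC_fh e by auto
  qed
  also have "\<dots> \<in> sets (nat_filtration S t)"
    using HitC_meas[of 0 S c "min h t"] nf_mono[of "min h t" t S] by auto
  finally show "HitC S c 0 h \<inter> {\<omega> \<in> paths S. firsthit {c} \<omega> \<le> ereal t} \<in> sets (nat_filtration S t)" .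
qed

lemma SM:
  assumes diff: "diffusion S P" and c: "c \<in> S" and x0: "x0 \<in> S"
    and A: "A \<in> stopped_sets S (firsthit {c})" and B: "B \<in> sets (path_space S)"
  shows "measure (P x0) {\<omega> \<in> A. firsthit {c} \<omega> < \<infinity> \<and> shift \<omega> (real_of_ereal (firsthit {c} \<omega>)) \<in> B}
       = measure (P x0) {\<omega> \<in> A. firsthit {c} \<omega> < \<infinity>} * measure (P c) B"
proof -
  have Ap: "A \<subseteq> paths S" using A unfolding stopped_sets_def
    using sets.sets_into_space space_ps by blast
  have Ameas: "A \<in> sets (path_space S)" using A unfolding stopped_sets_def by auto
  define E where "E = {\<omega> \<in> A. firsthit {c} \<omega> < \<infinity>}"
  have E_eq: "E = A \<inter> {\<omega> \<in> paths S. firsthit {c} \<omega> < \<infinity>}" unfolding E_def using Ap by auto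
  have Em: "E \<in> sets (P x0)" unfolding E_eq diff_basic(2)[OF diff x0]
    using Ameas fin_meas by auto
  have sm: "emeasure (P x0) {\<omega> \<in> A. firsthit {c} \<omega> < \<infinity> \<and> shift \<omega> (real_of_ereal (firsthit {c} \<omega>)) \<in> B}
     = (\<integral>\<^sup>+ \<omega>. indicator E \<omega> * emeasure (P (stopped_value (firsthit {c}) \<omega>)) B \<partial>P x0)"
    using diff stop_fh[of S c] x0 A B unfolding diffusion_def E_def by blast
  have "(\<lambda>\<omega>. indicator E \<omega> * emeasure (P (stopped_value (firsthit {c}) \<omega>)) B)
      = (\<lambda>\<omega>. indicator E \<omega> * emeasure (P c) B)"
  proof
    fix \<omega>
    show "indicator E \<omega> * emeasure (P (stopped_value (firsthit {c}) \<omega>)) B = indicator E \<omega> * emeasure (P c) B"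
    proof (cases "\<omega> \<in> E")
      case True
      then have "\<omega> \<in> paths S" "firsthit {c} \<omega> < \<infinity>" unfolding E_def using Ap by auto
      then obtain \<tau> where "firsthit {c} \<omega> = ereal \<tau>" "\<omega> \<tau> = c" using fh_fin by blast
      then show ?thesis unfolding stopped_value_def by simp
    qed simp
  qed
  then have "emeasure (P x0) {\<omega> \<in> A. firsthit {c} \<omega> < \<infinity> \<and> shift \<omega> (real_of_ereal (firsthit {c} \<omega>)) \<in> B}
      = emeasure (P x0) E * emeasure (P c) B"
    unfolding sm using Em by (simp add: nn_integral_multc nn_integral_indicator)
  then show ?thesis unfolding measure_def E_def by (simp add: enn2real_mult)
qed

lemma shift_paths:
  assumes "\<omega> \<in> paths S" "0 \<le> \<tau>"
  shows "shift \<omega> \<tau> \<in> paths S"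
proof -
  have "continuous_on {0..} (\<lambda>u. \<omega> (\<tau> + u))"
    by (rule continuous_on_compose2[OF paths_cont[OF assms(1)]])
       (use assms(2) in \<open>auto intro!: continuous_intros\<close>)
  then show ?thesis using assms unfolding paths_def shift_def by auto
qed

lemma Sh_eq:
  assumes cx: "c \<noteq> x" and Ap: "A \<subseteq> paths S"
  shows "{\<omega> \<in> A. firsthit {c} \<omega> < \<infinity> \<and> shift \<omega> (real_of_ereal (firsthit {c} \<omega>)) \<in> HitO S x 0 t'}
    = A \<inter> (\<Union>(a,b)\<in>(\<rat> \<inter> {0..}) \<times> (\<rat> \<inter> {0..}). (paths S - HitO S c 0 a) \<inter> HitC S c 0 b \<inter> HitO S x b (a + t'))"
proof (intro equalityI subsetI)
  fix \<omega> assume a: "\<omega> \<in> {\<omega> \<in> A. firsthit {c} \<omega> < \<infinity> \<and> shift \<omega> (real_of_ereal (firsthit {c} \<omega>)) \<in> HitO S x 0 t'}"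
  then have p: "\<omega> \<in> paths S" "\<omega> \<in> A" using Ap by auto
  obtain \<tau> where \<tau>: "firsthit {c} \<omega> = ereal \<tau>" "0 \<le> \<tau>" "\<omega> \<tau> = c" "\<forall>u. 0 \<le> u \<longrightarrow> u < \<tau> \<longrightarrow> \<omega> u \<noteq> c"
    using fh_fin[OF p(1)] a by blast
  obtain v where v: "0 \<le> v" "v < t'" "\<omega> (\<tau> + v) = x"
    using a \<tau>(1) unfolding HitO_def shift_def by auto
  define u where "u = \<tau> + v"
  have "v \<noteq> 0" using v \<tau> cx by auto
  then have tu: "\<tau> < u" unfolding u_def using v by auto
  obtain b where b: "b \<in> \<rat>" "\<tau> < b" "b < u" using Rats_dense_in_real[OF tu] by blast
  obtain a where a': "a \<in> \<rat>" "0 \<le> a" "a \<le> \<tau>" "u - t' < a"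
  proof (cases "u - t' < 0")
    case True then show ?thesis using that[of 0] \<tau> by auto
  next
    case False
    have "u - t' < \<tau>" unfolding u_def using v by auto
    then obtain a where "a \<in> \<rat>" "u - t' < a" "a < \<tau>" using Rats_dense_in_real by blast
    then show ?thesis using that[of a] False by auto
  qed
  have "\<omega> \<notin> HitO S c 0 a" unfolding HitO_def using \<tau> a' by force
  moreover have "\<omega> \<in> HitC S c 0 b" unfolding HitC_def using p \<tau> b by auto
  moreover have "\<omega> \<in> HitO S x b (a + t')" unfolding HitO_def using p b a' v u_def by (auto intro!: exI[of _ "\<tau> + v"])
  ultimately have "\<omega> \<in> (\<lambda>(a,b). (paths S - HitO S c 0 a) \<inter> HitC S c 0 b \<inter> HitO S x b (a + t')) (a,b)"
    using p by simp
  moreover have "(a,b) \<in> (\<rat> \<inter> {0..}) \<times> (\<rat> \<inter> {0..})" using a' b \<tau> by auto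
  ultimately have "\<omega> \<in> (\<Union>(a,b)\<in>(\<rat> \<inter> {0..}) \<times> (\<rat> \<inter> {0..}). (paths S - HitO S c 0 a) \<inter> HitC S c 0 b \<inter> HitO S x b (a + t'))"
    by (rule UN_I[rotated])
  then show "\<omega> \<in> A \<inter> (\<Union>(a,b)\<in>(\<rat> \<inter> {0..}) \<times> (\<rat> \<inter> {0..}). (paths S - HitO S c 0 a) \<inter> HitC S c 0 b \<inter> HitO S x b (a + t'))"
    using p by blast
next
  fix \<omega> assume "\<omega> \<in> A \<inter> (\<Union>(a,b)\<in>(\<rat> \<inter> {0..}) \<times> (\<rat> \<inter> {0..}). (paths S - HitO S c 0 a) \<inter> HitC S c 0 b \<inter> HitO S x b (a + t'))"
  then obtain a b where p: "\<omega> \<in> A" "\<omega> \<in> paths S" and ab: "0 \<le> a" "0 \<le> b"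
    and h1: "\<omega> \<notin> HitO S c 0 a" and h2: "\<omega> \<in> HitC S c 0 b" and h3: "\<omega> \<in> HitO S x b (a + t')"
    using Ap by auto
  have "firsthit {c} \<omega> \<le> ereal b" using h2 unfolding HitC_fh by auto
  then have fin: "firsthit {c} \<omega> < \<infinity>" by (auto intro: le_less_trans)
  obtain \<tau> where \<tau>: "firsthit {c} \<omega> = ereal \<tau>" "0 \<le> \<tau>" "\<omega> \<tau> = c"
    using fh_fin[OF p(2) fin] by blast
  have "\<tau> \<le> b" using \<open>firsthit {c} \<omega> \<le> ereal b\<close> \<tau> by simp
  have "a \<le> \<tau>" using h1 \<tau> p unfolding HitO_def by force
  obtain u where u: "b \<le> u" "u < a + t'" "\<omega> u = x" using h3 unfolding HitO_def by auto
  have "shift \<omega> \<tau> \<in> HitO S x 0 t'"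
    unfolding HitO_def using shift_paths[OF p(2) \<tau>(2)] u \<open>\<tau> \<le> b\<close> \<open>a \<le> \<tau>\<close>
    by (auto simp: shift_def intro!: exI[of _ "u - \<tau>"])
  then show "\<omega> \<in> {\<omega> \<in> A. firsthit {c} \<omega> < \<infinity> \<and> shift \<omega> (real_of_ereal (firsthit {c} \<omega>)) \<in> HitO S x 0 t'}"
    using p fin \<tau> by simp
qed

lemma Sh_meas:
  assumes cx: "c \<noteq> x" and A: "A \<in> sets (path_space S)"
  shows "{\<omega> \<in> A. firsthit {c} \<omega> < \<infinity> \<and> shift \<omega> (real_of_ereal (firsthit {c} \<omega>)) \<in> HitO S x 0 t'} \<in> sets (path_space S)"
proof -
  have Ap: "A \<subseteq> paths S" using A sets.sets_into_space space_ps by blast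
  have pm: "paths S \<in> sets (path_space S)" using sets.top[of "path_space S"] space_ps by simp
  have c: "countable ((\<rat> \<inter> {0..}) \<times> (\<rat> \<inter> {0..}) :: (real \<times> real) set)"
    using countable_rat by (intro countable_SIGMA) (auto intro: countable_Int1)
  show ?thesis unfolding Sh_eq[OF cx Ap]
    using A c pm
    by (intro sets.Int sets.countable_UN') (auto intro!: sets.Diff HitO_meas HitC_meas')
qed

lemma ivt_path:
  assumes "\<omega> \<in> paths S" "0 \<le> \<tau>" "(\<omega> 0 < c \<and> c < \<omega> \<tau>) \<or> (\<omega> \<tau> < c \<and> c < \<omega> 0)"
  shows "\<exists>u. 0 \<le> u \<and> u < \<tau> \<and> \<omega> u = c"
proof -
  have cont: "continuous_on {0..\<tau>} \<omega>" using paths_cont[OF assms(1)] by (rule continuous_on_subset) auto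
  obtain u where "0 \<le> u" "u \<le> \<tau>" "\<omega> u = c"
    using assms(3) IVT'[of \<omega> 0 c \<tau>, OF _ _ assms(2) cont] IVT2'[of \<omega> \<tau> c 0, OF _ _ assms(2) cont]
    by (auto simp: less_imp_le)
  moreover have "u \<noteq> \<tau>" using assms(3) calculation by auto
  ultimately show ?thesis by (intro exI[of _ u]) auto
qed

lemma POS:
  assumes diff: "diffusion S P" and rec: "recurrent S P"
    and xS: "x \<in> S" and yS: "y \<in> S" and zS: "z \<in> S"
    and btw: "(x < y \<and> y < z) \<or> (z < y \<and> y < x)"
  shows "0 < measure (P y) (FI S {x,z} x)"
proof (rule ccontr)
  assume "\<not> 0 < measure (P y) (FI S {x,z} x)"
  then have m0: "measure (P y) (FI S {x,z} x) = 0" using measure_nonneg[of "P y"] by (simp add: not_less order.antisym)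
  interpret Py: prob_space "P y" using diff_basic[OF diff yS] by simp
  interpret Pz: prob_space "P z" using diff_basic[OF diff zS] by simp
  have sy: "sets (P y) = sets (path_space S)" "space (P y) = paths S" using diff_basic[OF diff yS] by auto
  have sz: "sets (P z) = sets (path_space S)" "space (P z) = paths S" using diff_basic[OF diff zS] by auto
  have neq: "x \<noteq> y" "y \<noteq> z" "x \<noteq> z" using btw by auto
  have AEn: "AE \<omega> in P y. \<omega> \<notin> FI S {x,z} x"
    using m0 FI_meas[of "{x,z}" S x] sy by (intro AE_not_in null_setsI) (auto simp: Py.emeasure_eq_measure)
  have AEy: "AE \<omega> in P y. \<omega> 0 = y" using diff_basic[OF diff yS] by simp
  have AEz: "AE \<omega> in P z. \<omega> 0 = z" using diff_basic[OF diff zS] by simp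
  have AEpy: "AE \<omega> in P y. \<omega> \<in> paths S" using AE_space[of "P y"] sy by simp
  have AEpz: "AE \<omega> in P z. \<omega> \<in> paths S" using AE_space[of "P z"] sz by simp
  define f where "f t = measure (P y) (HitO S x 0 t)" for t
  define g where "g t = measure (P z) (HitO S x 0 t)" for t
  have f0: "0 \<le> f t" for t unfolding f_def by simp
  have g0: "0 \<le> g t" for t unfolding g_def by simp
  have g_le: "g t \<le> f t" for t
  proof -
    define Sh where "Sh = {\<omega> \<in> paths S. firsthit {y} \<omega> < \<infinity> \<and> shift \<omega> (real_of_ereal (firsthit {y} \<omega>)) \<in> HitO S x 0 t}"
    have "measure (P z) Sh = measure (P z) {\<omega> \<in> paths S. firsthit {y} \<omega> < \<infinity>} * f t"
      unfolding Sh_def f_def by (rule SM[OF diff yS zS ss_all HitO_meas]) simp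
    also have "\<dots> \<le> 1 * f t" using f0 by (intro mult_right_mono Pz.prob_le_1) auto
    finally have 1: "measure (P z) Sh \<le> f t" by simp
    have Shm: "Sh \<in> sets (P z)" unfolding Sh_def sz
      using neq sets.top[of "path_space S"] space_ps[of S] by (intro Sh_meas) auto
    have "AE \<omega> in P z. \<omega> \<in> HitO S x 0 t \<longrightarrow> \<omega> \<in> Sh"
      using AEz AEpz
    proof eventually_elim
      case (elim \<omega>)
      show ?case
      proof
        assume "\<omega> \<in> HitO S x 0 t"
        then obtain v where v: "0 \<le> v" "v < t" "\<omega> v = x" unfolding HitO_def by auto
        obtain u where u: "0 \<le> u" "u < v" "\<omega> u = y"
          using ivt_path[OF elim(2) v(1)] elim(1) v(3) btw by auto
        have "firsthit {y} \<omega> \<le> ereal u" unfolding firsthit_def using u by (intro Inf_lower) auto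
        then have fin: "firsthit {y} \<omega> < \<infinity>" by (auto intro: le_less_trans)
        obtain \<tau> where \<tau>: "firsthit {y} \<omega> = ereal \<tau>" "0 \<le> \<tau>" "\<omega> \<tau> = y"
          using fh_fin[OF elim(2) fin] by blast
        have "\<tau> \<le> u" using \<tau>(1) \<open>firsthit {y} \<omega> \<le> ereal u\<close> by simp
        have "shift \<omega> \<tau> \<in> HitO S x 0 t"
          unfolding HitO_def using shift_paths[OF elim(2) \<tau>(2)] v u \<open>\<tau> \<le> u\<close> \<tau>(2)
          by (auto simp: shift_def intro!: exI[of _ "v - \<tau>"])
        then show "\<omega> \<in> Sh" unfolding Sh_def using elim(2) fin \<tau> by simp
      qed
    qed
    then have "g t \<le> measure (P z) Sh" unfolding g_def by (intro Pz.finite_measure_mono_AE Shm)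
    then show ?thesis using 1 by simp
  qed
  have "\<exists>h>0. measure (P y) (HitC S z 0 h) < 1"
  proof (rule ccontr)
    assume na: "\<not> (\<exists>h>0. measure (P y) (HitC S z 0 h) < 1)"
    have all: "measure (P y) (HitC S z 0 (1 / real (Suc n))) = 1" for n
    proof -
      have "0 < 1 / real (Suc n)" by simp
      then have "\<not> measure (P y) (HitC S z 0 (1 / real (Suc n))) < 1" using na by blast
      then show ?thesis using Py.prob_le_1[of "HitC S z 0 (1 / real (Suc n))"] by linarith
    qed
    have "AE \<omega> in P y. \<omega> \<in> HitC S z 0 (1 / real (Suc n))" for n
      using all[of n] HitC_meas'[of 0 S z] sy by (subst Py.AE_in_set_eq_1) auto
    then have "AE \<omega> in P y. \<forall>n. \<omega> \<in> HitC S z 0 (1 / real (Suc n))" by (simp add: AE_all_countable)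
    then have "AE \<omega> in P y. False" using AEy AEpy
    proof eventually_elim
      case (elim \<omega>)
      have "firsthit {z} \<omega> \<le> ereal 1" using elim(1)[rule_format, of 0] unfolding HitC_fh by simp
      then have fin: "firsthit {z} \<omega> < \<infinity>" by (auto intro: le_less_trans)
      obtain \<tau> where \<tau>: "firsthit {z} \<omega> = ereal \<tau>" "0 \<le> \<tau>" "\<omega> \<tau> = z"
        using fh_fin[OF elim(3) fin] by blast
      have le: "\<tau> \<le> 1 / real (Suc n)" for n using elim(1)[rule_format, of n] \<tau>(1) unfolding HitC_fh by simp
      have "\<tau> = 0"
      proof (rule ccontr)
        assume "\<tau> \<noteq> 0"
        then have "0 < \<tau>" using \<tau> by simp
        then obtain n where "inverse (real (Suc n)) < \<tau>" using reals_Archimedean by blast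
        then show False using le[of n] by (simp add: inverse_eq_divide)
      qed
      then show False using \<tau> elim(2) neq by simp
    qed
    then show False by simp
  qed
  then obtain h where h: "0 < h" "measure (P y) (HitC S z 0 h) < 1" by blast
  define p where "p = measure (P y) (HitC S z 0 h)"
  have p0: "0 \<le> p" unfolding p_def by simp
  have main: "f t \<le> p * g t + g (t - h)" for t
  proof -
    define S1 where "S1 = {\<omega> \<in> HitC S z 0 h. firsthit {z} \<omega> < \<infinity> \<and> shift \<omega> (real_of_ereal (firsthit {z} \<omega>)) \<in> HitO S x 0 t}"
    define S2 where "S2 = {\<omega> \<in> paths S. firsthit {z} \<omega> < \<infinity> \<and> shift \<omega> (real_of_ereal (firsthit {z} \<omega>)) \<in> HitO S x 0 (t - h)}"
    have pm: "paths S \<in> sets (path_space S)" using sets.top[of "path_space S"] space_ps by simp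
    have S1m: "S1 \<in> sets (P y)" unfolding S1_def sy using neq h(1) by (intro Sh_meas HitC_meas') auto
    have S2m: "S2 \<in> sets (P y)" unfolding S2_def sy using neq pm by (intro Sh_meas) auto
    have "measure (P y) S1 = measure (P y) {\<omega> \<in> HitC S z 0 h. firsthit {z} \<omega> < \<infinity>} * g t"
      unfolding S1_def g_def using h(1) by (intro SM[OF diff zS yS ss_HitC HitO_meas]) auto
    also have "\<dots> \<le> p * g t" unfolding p_def using g0 HitC_meas'[of 0 S z h] sy h(1)
      by (intro mult_right_mono Py.finite_measure_mono) auto
    finally have 1: "measure (P y) S1 \<le> p * g t" .
    have "measure (P y) S2 = measure (P y) {\<omega> \<in> paths S. firsthit {z} \<omega> < \<infinity>} * g (t - h)"
      unfolding S2_def g_def by (intro SM[OF diff zS yS ss_all HitO_meas]) auto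
    also have "\<dots> \<le> 1 * g (t - h)" using g0 by (intro mult_right_mono Py.prob_le_1) auto
    finally have 2: "measure (P y) S2 \<le> g (t - h)" by simp
    have "AE \<omega> in P y. \<omega> \<in> HitO S x 0 t \<longrightarrow> \<omega> \<in> S1 \<union> S2"
      using AEy AEpy AEn
    proof eventually_elim
      case (elim \<omega>)
      show ?case
      proof
        assume "\<omega> \<in> HitO S x 0 t"
        then obtain v where v: "0 \<le> v" "v < t" "\<omega> v = x" unfolding HitO_def by auto
        obtain \<tau> where \<tau>: "0 \<le> \<tau>" "\<tau> \<le> v" "\<omega> \<tau> \<in> {x,z}" "\<forall>u. 0 \<le> u \<longrightarrow> u < \<tau> \<longrightarrow> \<omega> u \<notin> {x,z}"
          using exists_first[OF elim(2) _ v(1), of "{x,z}"] v(3) by auto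
        have "\<omega> \<tau> \<noteq> x" using elim \<tau> unfolding FI_def first_is_def by auto
        then have \<tau>z: "\<omega> \<tau> = z" using \<tau>(3) by auto
        have fh: "firsthit {z} \<omega> = ereal \<tau>" using \<tau> \<tau>z by (intro firsthit_eq) auto
        have "\<tau> \<noteq> v" using \<tau>z v neq by auto
        then have tv: "\<tau> < v" using \<tau> by simp
        have sh: "shift \<omega> \<tau> \<in> HitO S x 0 t'" if "v - \<tau> < t'" for t'
          unfolding HitO_def using shift_paths[OF elim(2) \<tau>(1)] v tv that
          by (auto simp: shift_def intro!: exI[of _ "v - \<tau>"])
        show "\<omega> \<in> S1 \<union> S2"
        proof (cases "\<tau> \<le> h")
          case True
          then have "\<omega> \<in> HitC S z 0 h" unfolding HitC_def using elim(2) \<tau> \<tau>z by auto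
          then show ?thesis unfolding S1_def using fh sh[of t] v \<tau> by auto
        next
          case False
          then show ?thesis unfolding S2_def using fh sh[of "t - h"] v \<tau> elim(2) by auto
        qed
      qed
    qed
    then have "f t \<le> measure (P y) (S1 \<union> S2)" unfolding f_def
      using S1m S2m by (intro Py.finite_measure_mono_AE) auto
    also have "\<dots> \<le> measure (P y) S1 + measure (P y) S2" using S1m S2m by (rule measure_Un_le)
    finally show ?thesis using 1 2 by simp
  qed
  have frec: "f t \<le> p * f t + f (t - h)" for t
    using main[of t] g_le[of t] g_le[of "t - h"] p0 mult_left_mono[OF g_le[of t] p0] by linarith
  have p1: "p < 1" unfolding p_def using h by simp
  have fz: "\<forall>t. t \<le> real n * h \<longrightarrow> f t = 0" for n
  proof (induction n)
    case 0
    have "HitO S x 0 t = {}" if "t \<le> 0" for t unfolding HitO_def using that by auto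
    then show ?case unfolding f_def by simp
  next
    case (Suc n)
    show ?case
    proof (intro allI impI)
      fix t assume "t \<le> real (Suc n) * h"
      then have "t - h \<le> real n * h" by (simp add: algebra_simps)
      then have "f (t - h) = 0" using Suc by simp
      then have "(1 - p) * f t \<le> 0" using frec[of t] by (simp add: algebra_simps)
      then have "f t \<le> 0" using p1 by (simp add: mult_le_0_iff)
      then show "f t = 0" using f0[of t] by simp
    qed
  qed
  have fall: "f t = 0" for t
  proof -
    obtain n where "t / h \<le> real n" using real_arch_simple by blast
    then have "t \<le> real n * h" using h(1) by (simp add: divide_le_eq)
    then show ?thesis using fz by blast
  qed
  have "AE \<omega> in P y. \<omega> \<notin> HitO S x 0 (real n)" for n
    using fall[of "real n"] HitO_meas[of 0 S x] sy unfolding f_def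
    by (intro AE_not_in null_setsI) (auto simp: Py.emeasure_eq_measure)
  then have "AE \<omega> in P y. \<forall>n. \<omega> \<notin> HitO S x 0 (real n)" by (simp add: AE_all_countable)
  moreover have "AE \<omega> in P y. \<exists>t\<ge>0. \<omega> t = x" using rec xS yS unfolding recurrent_def by blast
  ultimately have "AE \<omega> in P y. False" using AEpy
  proof eventually_elim
    case (elim \<omega>)
    then obtain t where t: "0 \<le> t" "\<omega> t = x" by auto
    obtain n where "t < real n" using reals_Archimedean2 by blast
    then have "\<omega> \<in> HitO S x 0 (real n)" unfolding HitO_def using elim t by auto
    then show False using elim by auto
  qed
  then show False by simp
qed

definition stoch :: "nat \<Rightarrow> real mat \<Rightarrow> bool" where
  "stoch m M \<longleftrightarrow> (\<forall>i<m. \<forall>j<m. 0 \<le> M $$ (i,j)) \<and> (\<forall>i<m. (\<Sum>j<m. M $$ (i,j)) = 1)"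

lemma mult_entry:
  assumes "A \<in> carrier_mat m m" "B \<in> carrier_mat m m" "i < m" "j < m"
  shows "(A * B) $$ (i,j) = (\<Sum>k<m. A $$ (i,k) * B $$ (k,j))"
  using assms by (simp add: scalar_prod_def lessThan_atLeast0)

lemma pow_mat_add:
  assumes "A \<in> carrier_mat m m"
  shows "A ^\<^sub>m (a + b) = A ^\<^sub>m a * A ^\<^sub>m b"
proof (induction b)
  case 0
  then show ?case using assms by simp
next
  case (Suc b)
  have "A ^\<^sub>m (a + Suc b) = A ^\<^sub>m (a + b) * A" by simp
  also have "\<dots> = (A ^\<^sub>m a * A ^\<^sub>m b) * A" using Suc by simp
  also have "\<dots> = A ^\<^sub>m a * (A ^\<^sub>m b * A)"
    using assms by (intro assoc_mult_mat) auto
  finally show ?case by simp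
qed

lemma stoch_mult:
  assumes "A \<in> carrier_mat m m" "B \<in> carrier_mat m m" "stoch m A" "stoch m B"
  shows "stoch m (A * B)"
  unfolding stoch_def
proof (intro conjI allI impI)
  fix i j assume ij: "i < m" "j < m"
  show "0 \<le> (A * B) $$ (i, j)" using assms ij
    by (subst mult_entry[OF assms(1,2) ij]) (auto simp: stoch_def intro!: sum_nonneg)
next
  fix i assume i: "i < m"
  have "(\<Sum>j<m. (A * B) $$ (i, j)) = (\<Sum>j<m. \<Sum>k<m. A $$ (i,k) * B $$ (k,j))"
    using assms i by (intro sum.cong refl, subst mult_entry) auto
  also have "\<dots> = (\<Sum>k<m. A $$ (i,k) * (\<Sum>j<m. B $$ (k,j)))"
    by (subst sum.swap) (simp add: sum_distrib_left)
  also have "\<dots> = (\<Sum>k<m. A $$ (i,k))"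
    using assms(4) by (simp add: stoch_def)
  also have "\<dots> = 1" using assms(3) i by (simp add: stoch_def)
  finally show "(\<Sum>j<m. (A * B) $$ (i, j)) = 1" .
qed

lemma stoch_one: "stoch m (1\<^sub>m m)"
proof -
  have "(\<Sum>j<m. (1\<^sub>m m :: real mat) $$ (i, j)) = 1" if "i < m" for i
  proof -
    have "(\<Sum>j<m. (1\<^sub>m m :: real mat) $$ (i, j)) = (\<Sum>j<m. if j = i then 1 else 0)"
      using that by (intro sum.cong) auto
    also have "\<dots> = 1" using that by simp
    finally show ?thesis .
  qed
  then show ?thesis unfolding stoch_def by auto
qed

lemma stoch_pow:
  assumes "M \<in> carrier_mat m m" "stoch m M"
  shows "stoch m (M ^\<^sub>m n)"
proof (induction n)
  case 0 then show ?case using assms stoch_one by simp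
next
  case (Suc n) then show ?case using assms by (simp add: stoch_mult)
qed

lemma convex_bound:
  assumes "stoch m W" "i < m" "\<And>k. k < m \<Longrightarrow> a \<le> v k \<and> v k \<le> b"
  shows "a \<le> (\<Sum>k<m. W $$ (i,k) * v k) \<and> (\<Sum>k<m. W $$ (i,k) * v k) \<le> b"
proof -
  have W0: "\<And>k. k < m \<Longrightarrow> 0 \<le> W $$ (i,k)" and W1: "(\<Sum>k<m. W $$ (i,k)) = 1"
    using assms(1,2) by (auto simp: stoch_def)
  have "a = (\<Sum>k<m. W $$ (i,k) * a)" by (simp add: W1 flip: sum_distrib_right)
  also have "\<dots> \<le> (\<Sum>k<m. W $$ (i,k) * v k)"
    using W0 assms(3) by (intro sum_mono mult_left_mono) auto
  finally have 1: "a \<le> (\<Sum>k<m. W $$ (i,k) * v k)" .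
  have "(\<Sum>k<m. W $$ (i,k) * v k) \<le> (\<Sum>k<m. W $$ (i,k) * b)"
    using W0 assms(3) by (intro sum_mono mult_left_mono) auto
  also have "\<dots> = b" using W1 by (simp add: sum_distrib_right[symmetric])
  finally show ?thesis using 1 by simp
qed

lemma contract_bound:
  assumes "stoch m Q" "i < m" "\<And>k. k < m \<Longrightarrow> a \<le> v k \<and> v k \<le> b"
    and "\<And>k. k < m \<Longrightarrow> \<delta> \<le> Q $$ (i,k)"
  shows "\<delta> * (\<Sum>k<m. v k) + (1 - m * \<delta>) * a \<le> (\<Sum>k<m. Q $$ (i,k) * v k) \<and>
         (\<Sum>k<m. Q $$ (i,k) * v k) \<le> \<delta> * (\<Sum>k<m. v k) + (1 - m * \<delta>) * b"
proof -
  have W1: "(\<Sum>k<m. Q $$ (i,k)) = 1" using assms(1,2) by (auto simp: stoch_def)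
  have eq: "(\<Sum>k<m. Q $$ (i,k) * v k) = \<delta> * (\<Sum>k<m. v k) + (\<Sum>k<m. (Q $$ (i,k) - \<delta>) * v k)"
    by (simp add: algebra_simps sum.distrib sum_distrib_left sum_subtractf)
  have s: "(\<Sum>k<m. (Q $$ (i,k) - \<delta>)) = 1 - m * \<delta>"
    using W1 by (simp add: sum_subtractf)
  have "(1 - m * \<delta>) * a = (\<Sum>k<m. (Q $$ (i,k) - \<delta>) * a)"
    by (simp add: s flip: sum_distrib_right)
  also have "\<dots> \<le> (\<Sum>k<m. (Q $$ (i,k) - \<delta>) * v k)"
    using assms(3,4) by (intro sum_mono mult_left_mono) auto
  finally have 1: "(1 - m * \<delta>) * a \<le> (\<Sum>k<m. (Q $$ (i,k) - \<delta>) * v k)" .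
  have "(\<Sum>k<m. (Q $$ (i,k) - \<delta>) * v k) \<le> (\<Sum>k<m. (Q $$ (i,k) - \<delta>) * b)"
    using assms(3,4) by (intro sum_mono mult_left_mono) auto
  also have "\<dots> = (1 - m * \<delta>) * b"
    using s by (simp add: sum_distrib_right[symmetric])
  finally have 2: "(\<Sum>k<m. (Q $$ (i,k) - \<delta>) * v k) \<le> (1 - m * \<delta>) * b" .
  show ?thesis unfolding eq using 1 2 by simp
qed

lemma stoch_entry_le1:
  assumes "stoch m W" "i < m" "j < m"
  shows "0 \<le> W $$ (i,j) \<and> W $$ (i,j) \<le> 1"
proof -
  have "W $$ (i,j) \<le> (\<Sum>k<m. W $$ (i,k))"
    using assms by (intro member_le_sum) (auto simp: stoch_def)
  then show ?thesis using assms by (auto simp: stoch_def)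
qed

lemma pos_pow:
  assumes M: "M \<in> carrier_mat m m" "stoch m M"
    and diag: "\<And>i. i < m \<Longrightarrow> 0 < M $$ (i,i)"
    and up: "\<And>i. Suc i < m \<Longrightarrow> 0 < M $$ (i, Suc i)"
    and down: "\<And>i. Suc i < m \<Longrightarrow> 0 < M $$ (Suc i, i)"
  shows "i < m \<Longrightarrow> j < m \<Longrightarrow> i \<le> j + n \<Longrightarrow> j \<le> i + n \<Longrightarrow> 0 < (M ^\<^sub>m n) $$ (i,j)"
proof (induction n arbitrary: j)
  case 0
  then show ?case using M by simp
next
  case (Suc n)
  have st: "stoch m (M ^\<^sub>m n)" using stoch_pow[OF M] .
  have e: "(M ^\<^sub>m Suc n) $$ (i,j) = (\<Sum>k<m. (M ^\<^sub>m n) $$ (i,k) * M $$ (k,j))"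
    using Suc.prems M by (simp only: pow_mat.simps) (rule mult_entry, auto)
  have nn: "\<And>k. k < m \<Longrightarrow> 0 \<le> (M ^\<^sub>m n) $$ (i,k) * M $$ (k,j)"
    using st M(2) Suc.prems by (auto simp: stoch_def)
  obtain k where k: "k < m" "0 < (M ^\<^sub>m n) $$ (i,k) * M $$ (k,j)"
  proof (cases "i \<le> j + n \<and> j \<le> i + n")
    case True
    then show ?thesis using that[of j] Suc diag[of j] by auto
  next
    case False
    show ?thesis
    proof (cases "j > i + n")
      case True
      then have "j = Suc (j - 1)" "j - 1 = i + n" using Suc.prems by auto
      then show ?thesis using that[of "j - 1"] Suc.IH[of "j - 1"] Suc.prems up[of "j - 1"]
        by (auto intro!: mult_pos_pos)
    next
      case False
      then have "i = j + n + 1" using Suc.prems \<open>\<not> (i \<le> j + n \<and> j \<le> i + n)\<close> by auto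
      then show ?thesis using that[of "Suc j"] Suc.IH[of "Suc j"] Suc.prems down[of j]
        by (auto intro!: mult_pos_pos)
    qed
  qed
  have "0 < (\<Sum>k<m. (M ^\<^sub>m n) $$ (i,k) * M $$ (k,j))"
    using k nn by (intro sum_pos2[of _ k]) auto
  then show ?case using e by simp
qed

lemma conv_main:
  assumes M: "M \<in> carrier_mat m m" "stoch m M" and m: "0 < m"
    and diag: "\<And>i. i < m \<Longrightarrow> 0 < M $$ (i,i)"
    and up: "\<And>i. Suc i < m \<Longrightarrow> 0 < M $$ (i, Suc i)"
    and down: "\<And>i. Suc i < m \<Longrightarrow> 0 < M $$ (Suc i, i)"
  shows "\<exists>\<pi>. (\<forall>j<m. 0 < \<pi> j) \<and> (\<Sum>j<m. \<pi> j) = 1 \<and>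
           (\<forall>i<m. \<forall>j<m. (\<lambda>n. (M ^\<^sub>m n) $$ (i,j)) \<longlonglongrightarrow> \<pi> j)"
proof -
  define Q where "Q = M ^\<^sub>m m"
  have Qpos: "0 < Q $$ (i,j)" if "i < m" "j < m" for i j
    unfolding Q_def using pos_pow[OF M diag up down] that by auto
  define \<delta> where "\<delta> = Min ((\<lambda>(i,j). Q $$ (i,j)) ` ({..<m} \<times> {..<m}))"
  have \<delta>pos: "0 < \<delta>" unfolding \<delta>_def using m Qpos by (subst Min_gr_iff) auto
  have \<delta>le: "\<delta> \<le> Q $$ (i,j)" if "i < m" "j < m" for i j
    unfolding \<delta>_def using that by (intro Min_le) auto
  have Pst: "stoch m (M ^\<^sub>m n)" for n using stoch_pow[OF M] .
  have Pcar: "M ^\<^sub>m n \<in> carrier_mat m m" for n using M by simp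
  define c where "c = 1 - m * \<delta>"
  have "real m * \<delta> = (\<Sum>k<m. \<delta>)" by simp
  also have "\<dots> \<le> (\<Sum>k<m. Q $$ (0,k))" using \<delta>le m by (intro sum_mono) auto
  also have "\<dots> = 1" using Pst[of m] m unfolding Q_def stoch_def by auto
  finally have c0: "0 \<le> c" unfolding c_def by simp
  have c1: "c < 1" unfolding c_def using m \<delta>pos by simp
  have bound1: "\<forall>i<m. a \<le> (M ^\<^sub>m n') $$ (i,j) \<and> (M ^\<^sub>m n') $$ (i,j) \<le> b"
    if "j < m" "\<forall>i<m. a \<le> (M ^\<^sub>m n) $$ (i,j) \<and> (M ^\<^sub>m n) $$ (i,j) \<le> b" "n \<le> n'"
    for j a b n n'
  proof (intro allI impI)
    fix i assume i: "i < m"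
    have "M ^\<^sub>m n' = M ^\<^sub>m (n' - n) * M ^\<^sub>m n"
      using pow_mat_add[OF M(1), of "n' - n" n] that(3) by simp
    then have "(M ^\<^sub>m n') $$ (i,j) = (\<Sum>k<m. (M ^\<^sub>m (n' - n)) $$ (i,k) * (M ^\<^sub>m n) $$ (k,j))"
      using i that(1) by (simp only:) (rule mult_entry[OF Pcar Pcar])
    then show "a \<le> (M ^\<^sub>m n') $$ (i,j) \<and> (M ^\<^sub>m n') $$ (i,j) \<le> b"
      using convex_bound[OF Pst i, of a "\<lambda>k. (M ^\<^sub>m n) $$ (k,j)" b] that(2) by simp
  qed
  have step: "\<exists>a b. b - a \<le> c ^ K \<and> (\<forall>i<m. a \<le> (M ^\<^sub>m (K*m)) $$ (i,j) \<and> (M ^\<^sub>m (K*m)) $$ (i,j) \<le> b)"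
    if j: "j < m" for K j
  proof (induction K)
    case 0
    show ?case using stoch_entry_le1[OF Pst _ j, of _ 0]
      by (intro exI[of _ 0] exI[of _ 1]) auto
  next
    case (Suc K)
    then obtain a b where ab: "b - a \<le> c ^ K"
      "\<forall>i<m. a \<le> (M ^\<^sub>m (K*m)) $$ (i,j) \<and> (M ^\<^sub>m (K*m)) $$ (i,j) \<le> b" by blast
    define S where "S = (\<Sum>k<m. (M ^\<^sub>m (K*m)) $$ (k,j))"
    have e: "(M ^\<^sub>m (Suc K * m)) $$ (i,j) = (\<Sum>k<m. Q $$ (i,k) * (M ^\<^sub>m (K*m)) $$ (k,j))"
      if i: "i < m" for i
    proof -
      have "M ^\<^sub>m (Suc K * m) = Q * M ^\<^sub>m (K*m)"
        unfolding Q_def using pow_mat_add[OF M(1), of m "K*m"] by simp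
      then show ?thesis using i j unfolding Q_def by (simp only:) (rule mult_entry[OF Pcar Pcar])
    qed
    have "\<forall>i<m. \<delta> * S + c * a \<le> (M ^\<^sub>m (Suc K * m)) $$ (i,j) \<and>
                (M ^\<^sub>m (Suc K * m)) $$ (i,j) \<le> \<delta> * S + c * b"
    proof (intro allI impI)
      fix i assume i: "i < m"
      show "\<delta> * S + c * a \<le> (M ^\<^sub>m (Suc K * m)) $$ (i,j) \<and>
                (M ^\<^sub>m (Suc K * m)) $$ (i,j) \<le> \<delta> * S + c * b"
        unfolding e[OF i] S_def c_def
        using contract_bound[OF Pst[of m] i, of a "\<lambda>k. (M ^\<^sub>m (K*m)) $$ (k,j)" b \<delta>] ab(2) \<delta>le[OF i]
        unfolding Q_def by auto
    qed
    moreover have "(\<delta> * S + c * b) - (\<delta> * S + c * a) \<le> c ^ Suc K"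
    proof -
      have "(\<delta> * S + c * b) - (\<delta> * S + c * a) = c * (b - a)" by (simp add: algebra_simps)
      also have "\<dots> \<le> c * c ^ K" using ab(1) c0 by (intro mult_left_mono) auto
      finally show ?thesis by simp
    qed
    ultimately show ?case by blast
  qed
  have close: "\<exists>N. \<forall>n\<ge>N. \<forall>n'\<ge>N. \<forall>i<m. \<forall>i'<m. \<bar>(M ^\<^sub>m n) $$ (i,j) - (M ^\<^sub>m n') $$ (i',j)\<bar> < e"
    if j: "j < m" and e: "0 < e" for j e
  proof -
    obtain K where K: "c ^ K < e" using real_arch_pow_inv[OF e c1] by blast
    obtain a b where ab: "b - a \<le> c ^ K"
      "\<forall>i<m. a \<le> (M ^\<^sub>m (K*m)) $$ (i,j) \<and> (M ^\<^sub>m (K*m)) $$ (i,j) \<le> b"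
      using step[OF j, of K] by blast
    show ?thesis
    proof (intro exI[of _ "K*m"] allI impI)
      fix n n' i i' assume nn: "K*m \<le> n" "K*m \<le> n'" and ii: "i < m" "i' < m"
      have "a \<le> (M ^\<^sub>m n) $$ (i,j) \<and> (M ^\<^sub>m n) $$ (i,j) \<le> b"
        using bound1[OF j ab(2) nn(1)] ii by auto
      moreover have "a \<le> (M ^\<^sub>m n') $$ (i',j) \<and> (M ^\<^sub>m n') $$ (i',j) \<le> b"
        using bound1[OF j ab(2) nn(2)] ii by auto
      ultimately show "\<bar>(M ^\<^sub>m n) $$ (i,j) - (M ^\<^sub>m n') $$ (i',j)\<bar> < e"
        using ab(1) K by linarith
    qed
  qed
  define \<pi> where "\<pi> j = lim (\<lambda>n. (M ^\<^sub>m n) $$ (0,j))" for j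
  have conv0: "(\<lambda>n. (M ^\<^sub>m n) $$ (0,j)) \<longlonglongrightarrow> \<pi> j" if j: "j < m" for j
  proof -
    have "Cauchy (\<lambda>n. (M ^\<^sub>m n) $$ (0,j))"
    proof (rule CauchyI)
      fix e :: real assume "0 < e"
      then obtain N where "\<forall>n\<ge>N. \<forall>n'\<ge>N. \<forall>i<m. \<forall>i'<m. \<bar>(M ^\<^sub>m n) $$ (i,j) - (M ^\<^sub>m n') $$ (i',j)\<bar> < e"
        using close[OF j] by blast
      then show "\<exists>N. \<forall>n\<ge>N. \<forall>n'\<ge>N. norm ((M ^\<^sub>m n) $$ (0,j) - (M ^\<^sub>m n') $$ (0,j)) < e"
        using m by (intro exI[of _ N]) auto
    qed
    then show ?thesis unfolding \<pi>_def using Cauchy_convergent convergent_LIMSEQ_iff by blast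
  qed
  have convi: "(\<lambda>n. (M ^\<^sub>m n) $$ (i,j)) \<longlonglongrightarrow> \<pi> j" if i: "i < m" and j: "j < m" for i j
  proof -
    have "(\<lambda>n. (M ^\<^sub>m n) $$ (i,j) - (M ^\<^sub>m n) $$ (0,j)) \<longlonglongrightarrow> 0"
    proof (rule LIMSEQ_I)
      fix e :: real assume "0 < e"
      then obtain N where "\<forall>n\<ge>N. \<forall>n'\<ge>N. \<forall>i<m. \<forall>i'<m. \<bar>(M ^\<^sub>m n) $$ (i,j) - (M ^\<^sub>m n') $$ (i',j)\<bar> < e"
        using close[OF j] by blast
      then show "\<exists>no. \<forall>n\<ge>no. norm ((M ^\<^sub>m n) $$ (i,j) - (M ^\<^sub>m n) $$ (0,j) - 0) < e"
        using m i by (intro exI[of _ N]) auto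
    qed
    from tendsto_add[OF this conv0[OF j]] show ?thesis by simp
  qed
  have pos: "0 < \<pi> j" if j: "j < m" for j
  proof -
    have "\<delta> \<le> (M ^\<^sub>m n) $$ (0,j)" if n: "m \<le> n" for n
    proof -
      have "M ^\<^sub>m n = M ^\<^sub>m (n - m) * Q"
        unfolding Q_def using pow_mat_add[OF M(1), of "n - m" m] n by simp
      then have "(M ^\<^sub>m n) $$ (0,j) = (\<Sum>k<m. (M ^\<^sub>m (n - m)) $$ (0,k) * Q $$ (k,j))"
        using j m unfolding Q_def by (simp only:) (rule mult_entry[OF Pcar Pcar])
      also have "\<dots> \<ge> (\<Sum>k<m. (M ^\<^sub>m (n - m)) $$ (0,k) * \<delta>)"
        using \<delta>le j Pst[of "n-m"] m by (intro sum_mono mult_left_mono) (auto simp: stoch_def)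
      also have "(\<Sum>k<m. (M ^\<^sub>m (n - m)) $$ (0,k) * \<delta>) = \<delta>"
        using Pst[of "n-m"] m by (simp add: stoch_def flip: sum_distrib_right)
      finally show ?thesis .
    qed
    then have "\<delta> \<le> \<pi> j" using LIMSEQ_le_const[OF conv0[OF j]] by blast
    then show ?thesis using \<delta>pos by simp
  qed
  have "(\<lambda>n. \<Sum>j<m. (M ^\<^sub>m n) $$ (0,j)) \<longlonglongrightarrow> (\<Sum>j<m. \<pi> j)"
    using conv0 by (intro tendsto_sum) auto
  moreover have "(\<lambda>n. \<Sum>j<m. (M ^\<^sub>m n) $$ (0,j)) = (\<lambda>n. 1)"
    using Pst m by (auto simp: stoch_def)
  ultimately have "(\<lambda>n. 1::real) \<longlonglongrightarrow> (\<Sum>j<m. \<pi> j)" by simp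
  then have "(\<Sum>j<m. \<pi> j) = 1" using LIMSEQ_unique[OF _ tendsto_const] by blast
  then show ?thesis using pos convi by blast
qed

locale tri =
  fixes A :: "real mat" and s :: nat
  assumes Acar: "A \<in> carrier_mat s s" and s2: "2 \<le> s"
    and nonneg: "\<And>i j. i < s \<Longrightarrow> j < s \<Longrightarrow> 0 \<le> A $$ (i,j)"
    and rows: "\<And>i. i < s \<Longrightarrow> (\<Sum>j<s. A $$ (i,j)) = 1"
    and zero: "\<And>i j. i < s \<Longrightarrow> j < s \<Longrightarrow> A $$ (i,j) \<noteq> 0 \<Longrightarrow> j = Suc i \<or> i = Suc j"
    and posu: "\<And>i. Suc i < s \<Longrightarrow> 0 < A $$ (i, Suc i)"
    and posd: "\<And>i. Suc i < s \<Longrightarrow> 0 < A $$ (Suc i, i)"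
begin

lemma Ast: "stoch s A" using nonneg rows by (auto simp: stoch_def)

lemma parity: "i < s \<Longrightarrow> j < s \<Longrightarrow> odd (i + j + n) \<Longrightarrow> (A ^\<^sub>m n) $$ (i,j) = 0"
proof (induction n arbitrary: j)
  case 0 then show ?case using Acar by auto
next
  case (Suc n)
  have "(A ^\<^sub>m Suc n) $$ (i,j) = (\<Sum>k<s. (A ^\<^sub>m n) $$ (i,k) * A $$ (k,j))"
    using Suc.prems Acar by (simp only: pow_mat.simps) (rule mult_entry, auto)
  also have "\<dots> = (\<Sum>k<s. 0)"
  proof (intro sum.cong refl)
    fix k assume k: "k \<in> {..<s}"
    show "(A ^\<^sub>m n) $$ (i,k) * A $$ (k,j) = 0"
    proof (cases "A $$ (k,j) = 0")
      case False
      then have "j = Suc k \<or> k = Suc j" using zero[of k j] k Suc.prems by auto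
      then have od: "odd (i + k + n)" using Suc.prems(3) by presburger
      have "k < s" using k by simp
      then have "(A ^\<^sub>m n) $$ (i,k) = 0" using Suc.IH[of k] Suc.prems(1) od by blast
      then show ?thesis by simp
    qed simp
  qed
  finally show ?case by simp
qed

lemma par_A2: "a < s \<Longrightarrow> b < s \<Longrightarrow> odd (a + b) \<Longrightarrow> (A ^\<^sub>m 2) $$ (a,b) = 0"
  using parity[of a b 2] by simp

lemma A2: "A ^\<^sub>m 2 = A * A"
  using Acar by (simp add: numeral_2_eq_2)

lemma A2_entry: "a < s \<Longrightarrow> b < s \<Longrightarrow> (A ^\<^sub>m 2) $$ (a,b) = (\<Sum>k<s. A $$ (a,k) * A $$ (k,b))"
  unfolding A2 by (rule mult_entry[OF Acar Acar])

lemma A2_ge: "a < s \<Longrightarrow> b < s \<Longrightarrow> k < s \<Longrightarrow> A $$ (a,k) * A $$ (k,b) \<le> (A ^\<^sub>m 2) $$ (a,b)"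
  unfolding A2_entry using nonneg by (intro member_le_sum) auto

lemma reindex_par:
  assumes c: "c \<le> 1" and m: "\<And>l. l < m \<longleftrightarrow> 2 * l + c < s"
    and f0: "\<And>k. k < s \<Longrightarrow> odd (k + c) \<Longrightarrow> f k = 0"
  shows "(\<Sum>k<s. f k) = (\<Sum>l<m. f (2 * l + c))"
proof -
  have "(\<Sum>k<s. f k) = (\<Sum>k\<in>(\<lambda>l. 2 * l + c) ` {..<m}. f k)"
  proof (rule sum.mono_neutral_right)
    show "(\<lambda>l. 2 * l + c) ` {..<m} \<subseteq> {..<s}" using m by auto
    show "\<forall>k\<in>{..<s} - (\<lambda>l. 2 * l + c) ` {..<m}. f k = 0"
    proof
      fix k assume k: "k \<in> {..<s} - (\<lambda>l. 2 * l + c) ` {..<m}"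
      have "odd (k + c)"
      proof (rule ccontr)
        assume "\<not> odd (k + c)"
        then have "even (k + c)" by simp
        then have "k = 2 * ((k - c) div 2) + c" using c by presburger
        moreover have "(k - c) div 2 < m" using m[of "(k - c) div 2"] k calculation by auto
        ultimately show False using k by blast
      qed
      then show "f k = 0" using f0 k by auto
    qed
  qed auto
  also have "\<dots> = (\<Sum>l<m. f (2 * l + c))"
    by (subst sum.reindex) (auto simp: inj_on_def)
  finally show ?thesis .
qed

lemma block:
  assumes c: "c \<le> 1" and m: "\<And>l. l < m \<longleftrightarrow> 2 * l + c < s"
  shows "\<exists>\<pi>. (\<forall>j<m. 0 < \<pi> j) \<and> (\<Sum>j<m. \<pi> j) = 1 \<and>
           (\<forall>i<m. \<forall>j<m. (\<lambda>n. (A ^\<^sub>m (2 * n)) $$ (2 * i + c, 2 * j + c)) \<longlonglongrightarrow> \<pi> j)"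
proof -
  define B where "B = mat m m (\<lambda>(i,j). (A ^\<^sub>m 2) $$ (2 * i + c, 2 * j + c))"
  have Bcar: "B \<in> carrier_mat m m" unfolding B_def by simp
  have m0: "0 < m" using m[of 0] c s2 by auto
  have A2st: "stoch s (A ^\<^sub>m 2)" using stoch_pow[OF Acar Ast] .
  have Bst: "stoch m B" unfolding stoch_def
  proof (intro conjI allI impI)
    fix i j assume "i < m" "j < m"
    then show "0 \<le> B $$ (i,j)" unfolding B_def using A2st m by (auto simp: stoch_def)
  next
    fix i assume i: "i < m"
    have "(\<Sum>j<m. B $$ (i,j)) = (\<Sum>l<m. (A ^\<^sub>m 2) $$ (2 * i + c, 2 * l + c))"
      unfolding B_def using i by (intro sum.cong) auto
    also have "\<dots> = (\<Sum>k<s. (A ^\<^sub>m 2) $$ (2 * i + c, k))"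
    proof (rule reindex_par[symmetric, OF c m])
      fix k assume k: "k < s" "odd (k + c)"
      have "odd (2 * i + c + k)" using k(2) by presburger
      moreover have "2 * i + c < s" using m i by simp
      ultimately show "(A ^\<^sub>m 2) $$ (2 * i + c, k) = 0" using k(1) by (intro par_A2)
    qed
    also have "\<dots> = 1" using A2st m i by (auto simp: stoch_def)
    finally show "(\<Sum>j<m. B $$ (i,j)) = 1" .
  qed
  have Bdiag: "0 < B $$ (i,i)" if i: "i < m" for i
  proof -
    define r where "r = 2 * i + c"
    have r: "r < s" using m i r_def by auto
    have "0 < (A ^\<^sub>m 2) $$ (r, r)"
    proof (cases "Suc r < s")
      case True
      have "0 < A $$ (r, Suc r) * A $$ (Suc r, r)"
        using posu[OF True] posd[OF True] by (rule mult_pos_pos)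
      also have "\<dots> \<le> (A ^\<^sub>m 2) $$ (r, r)" using A2_ge[OF r r True] .
      finally show ?thesis .
    next
      case False
      then obtain q where q: "r = Suc q" using r s2 by (cases r) auto
      have qs: "Suc q < s" using q r by simp
      have "0 < A $$ (r, q) * A $$ (q, r)"
        unfolding q using posu[OF qs] posd[OF qs] by (simp add: mult_pos_pos)
      also have "\<dots> \<le> (A ^\<^sub>m 2) $$ (r, r)" using A2_ge[OF r r] qs q by simp
      finally show ?thesis .
    qed
    then show ?thesis unfolding B_def r_def using i by simp
  qed
  have Bup: "0 < B $$ (i, Suc i)" if i: "Suc i < m" for i
  proof -
    define r where "r = 2 * i + c"
    have r: "Suc (Suc r) < s" using m[of "Suc i"] i r_def by auto
    have "0 < A $$ (r, Suc r) * A $$ (Suc r, Suc (Suc r))" using posu r by (auto intro!: mult_pos_pos)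
    also have "\<dots> \<le> (A ^\<^sub>m 2) $$ (r, Suc (Suc r))" using A2_ge[of r "Suc (Suc r)" "Suc r"] r by simp
    finally have "0 < (A ^\<^sub>m 2) $$ (2 * i + c, 2 * Suc i + c)" unfolding r_def by simp
    then show ?thesis unfolding B_def using i by simp
  qed
  have Bdown: "0 < B $$ (Suc i, i)" if i: "Suc i < m" for i
  proof -
    define r where "r = 2 * i + c"
    have r: "Suc (Suc r) < s" using m[of "Suc i"] i r_def by auto
    have "0 < A $$ (Suc (Suc r), Suc r) * A $$ (Suc r, r)" using posd r by (auto intro!: mult_pos_pos)
    also have "\<dots> \<le> (A ^\<^sub>m 2) $$ (Suc (Suc r), r)" using A2_ge[of "Suc (Suc r)" r "Suc r"] r by simp
    finally have "0 < (A ^\<^sub>m 2) $$ (2 * Suc i + c, 2 * i + c)" unfolding r_def by simp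
    then show ?thesis unfolding B_def using i by simp
  qed
  have pw: "(A ^\<^sub>m (2 * n)) $$ (2 * i + c, 2 * j + c) = (B ^\<^sub>m n) $$ (i,j)"
    if "i < m" "j < m" for n i j
    using that
  proof (induction n arbitrary: j)
    case 0
    have "2 * i + c < s" "2 * j + c < s" using 0 m by auto
    then show ?case using Acar Bcar 0 by auto
  next
    case (Suc n)
    have ij: "2 * i + c < s" "2 * j + c < s" using Suc.prems m by auto
    have "A ^\<^sub>m (2 * Suc n) = A ^\<^sub>m (2 * n) * A ^\<^sub>m 2"
      using pow_mat_add[OF Acar, of "2 * n" 2] by simp
    then have "(A ^\<^sub>m (2 * Suc n)) $$ (2 * i + c, 2 * j + c)
       = (\<Sum>k<s. (A ^\<^sub>m (2 * n)) $$ (2 * i + c, k) * (A ^\<^sub>m 2) $$ (k, 2 * j + c))"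
      using ij Acar by (simp only:) (rule mult_entry, auto)
    also have "\<dots> = (\<Sum>l<m. (A ^\<^sub>m (2 * n)) $$ (2 * i + c, 2 * l + c) * (A ^\<^sub>m 2) $$ (2 * l + c, 2 * j + c))"
    proof (rule reindex_par[OF c m])
      fix k assume k: "k < s" "odd (k + c)"
      have "odd (k + (2 * j + c))" using k(2) by presburger
      then have "(A ^\<^sub>m 2) $$ (k, 2 * j + c) = 0" using k(1) ij(2) by (intro par_A2)
      then show "(A ^\<^sub>m (2 * n)) $$ (2 * i + c, k) * (A ^\<^sub>m 2) $$ (k, 2 * j + c) = 0" by simp
    qed
    also have "\<dots> = (\<Sum>l<m. (B ^\<^sub>m n) $$ (i, l) * B $$ (l, j))"
      using Suc.IH Suc.prems unfolding B_def by (intro sum.cong) auto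
    also have "\<dots> = (B ^\<^sub>m Suc n) $$ (i,j)"
      using Bcar Suc.prems by (simp only: pow_mat.simps) (rule mult_entry[symmetric], auto)
    finally show ?case .
  qed
  obtain \<pi> where \<pi>: "\<forall>j<m. 0 < \<pi> j" "(\<Sum>j<m. \<pi> j) = 1"
    "\<forall>i<m. \<forall>j<m. (\<lambda>n. (B ^\<^sub>m n) $$ (i,j)) \<longlonglongrightarrow> \<pi> j"
    using conv_main[OF Bcar Bst m0 Bdiag Bup Bdown] by blast
  show ?thesis using \<pi> pw by (intro exI[of _ \<pi>]) auto
qed

end

lemma assemble:
  assumes "\<forall>j<m. 0 < \<pi> j" "(\<Sum>j<m. \<pi> j) = 1"
    "\<forall>i<m. \<forall>j<m. (\<lambda>n. Pm n $$ (i,j)) \<longlonglongrightarrow> \<pi> j" "\<forall>n. Pm n \<in> carrier_mat m m"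
  shows "\<exists>A1 C1. A1 \<in> carrier_mat m m \<and> mat_tendsto Pm A1 \<and> stochastic_mat A1 \<and>
     C1 \<in> carrier_mat 1 m \<and> (\<forall>j<m. 0 < C1 $$ (0,j)) \<and> A1 = mat m 1 (\<lambda>_. 1) * C1"
proof (intro exI conjI)
  let ?A1 = "mat m m (\<lambda>(i,j). \<pi> j)" and ?C1 = "mat 1 m (\<lambda>(i,j). \<pi> j)"
  show "?A1 \<in> carrier_mat m m" by simp
  show "mat_tendsto Pm ?A1" unfolding mat_tendsto_def using assms(3,4) by auto
  show "stochastic_mat ?A1" unfolding stochastic_mat_def using assms(1,2)
    by (auto simp: less_imp_le)
  show "?C1 \<in> carrier_mat 1 m" by simp
  show "\<forall>j<m. 0 < ?C1 $$ (0,j)" using assms(1) by simp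
  show "?A1 = mat m 1 (\<lambda>_. 1) * ?C1"
    by (rule eq_matI) (auto simp: scalar_prod_def)
qed

theorem (in tri) final:
  shows "\<exists>A1 A2 C1 C2.
           A1 \<in> carrier_mat ((s+1) div 2) ((s+1) div 2) \<and> A2 \<in> carrier_mat (s div 2) (s div 2) \<and>
           mat_tendsto (\<lambda>n. P_odd (A ^\<^sub>m (2*n))) A1 \<and>
           mat_tendsto (\<lambda>n. P_even (A ^\<^sub>m (2*n))) A2 \<and>
           stochastic_mat A1 \<and> stochastic_mat A2 \<and>
           C1 \<in> carrier_mat 1 ((s+1) div 2) \<and> C2 \<in> carrier_mat 1 (s div 2) \<and>
           (\<forall>j<(s+1) div 2. 0 < C1 $$ (0,j)) \<and> (\<forall>j<s div 2. 0 < C2 $$ (0,j)) \<and>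
           A1 = mat ((s+1) div 2) 1 (\<lambda>_. 1) * C1 \<and>
           A2 = mat (s div 2) 1 (\<lambda>_. 1) * C2"
proof -
  have m1: "l < (s+1) div 2 \<longleftrightarrow> 2 * l + 0 < s" for l by presburger
  have m2: "l < s div 2 \<longleftrightarrow> 2 * l + 1 < s" for l by presburger
  obtain \<pi>1 where p1: "\<forall>j<(s+1) div 2. 0 < \<pi>1 j" "(\<Sum>j<(s+1) div 2. \<pi>1 j) = 1"
    "\<forall>i<(s+1) div 2. \<forall>j<(s+1) div 2. (\<lambda>n. (A ^\<^sub>m (2 * n)) $$ (2 * i + 0, 2 * j + 0)) \<longlonglongrightarrow> \<pi>1 j"
    using block[of 0 "(s+1) div 2"] m1 by auto
  obtain \<pi>2 where p2: "\<forall>j<s div 2. 0 < \<pi>2 j" "(\<Sum>j<s div 2. \<pi>2 j) = 1"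
    "\<forall>i<s div 2. \<forall>j<s div 2. (\<lambda>n. (A ^\<^sub>m (2 * n)) $$ (2 * i + 1, 2 * j + 1)) \<longlonglongrightarrow> \<pi>2 j"
    using block[of 1 "s div 2"] m2 by auto
  have d: "dim_row (A ^\<^sub>m k) = s" for k using Acar by simp
  obtain A1 C1 where 1: "A1 \<in> carrier_mat ((s+1) div 2) ((s+1) div 2)"
    "mat_tendsto (\<lambda>n. P_odd (A ^\<^sub>m (2*n))) A1" "stochastic_mat A1"
    "C1 \<in> carrier_mat 1 ((s+1) div 2)" "\<forall>j<(s+1) div 2. 0 < C1 $$ (0,j)"
    "A1 = mat ((s+1) div 2) 1 (\<lambda>_. 1) * C1"
    using assemble[OF p1(1,2), of "\<lambda>n. P_odd (A ^\<^sub>m (2*n))"] p1(3)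
    unfolding P_odd_def d by auto
  obtain A2 C2 where 2: "A2 \<in> carrier_mat (s div 2) (s div 2)"
    "mat_tendsto (\<lambda>n. P_even (A ^\<^sub>m (2*n))) A2" "stochastic_mat A2"
    "C2 \<in> carrier_mat 1 (s div 2)" "\<forall>j<s div 2. 0 < C2 $$ (0,j)"
    "A2 = mat (s div 2) 1 (\<lambda>_. 1) * C2"
    using assemble[OF p2(1,2), of "\<lambda>n. P_even (A ^\<^sub>m (2*n))"] p2(3)
    unfolding P_even_def d by auto
  show ?thesis using 1 2 by blast
qed

lemma first_is_start:
  assumes "\<omega> 0 = x" "x \<in> D"
  shows "first_is D a \<omega> \<longleftrightarrow> a = x"
proof
  assume "first_is D a \<omega>"
  moreover have "first_is D x \<omega>" unfolding first_is_def using assms by (intro conjI exI[of _ 0]) auto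
  ultimately show "a = x" by (rule first_is_unique)
next
  assume "a = x"
  then show "first_is D a \<omega>" unfolding first_is_def using assms by (intro conjI exI[of _ 0]) auto
qed

lemma trans_FI:
  assumes diff: "diffusion S P" and fin: "finite D" and x: "x \<in> D" and DS: "D \<subseteq> S"
  shows "trans_prob P D x y = measure (P x) (FI S (D - {x}) y)"
proof -
  have xS: "x \<in> S" using x DS by auto
  note b = diff_basic[OF diff xS]
  have e1: "{\<omega> \<in> space (P x). tau D 2 \<omega> < \<infinity> \<and> stopped_value (tau D 2) \<omega> = y}
      = (\<Union>a\<in>D. FI S D a \<inter> FI S (D - {a}) y)"
  proof (intro equalityI subsetI)
    fix \<omega> assume "\<omega> \<in> {\<omega> \<in> space (P x). tau D 2 \<omega> < \<infinity> \<and> stopped_value (tau D 2) \<omega> = y}"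
    then have p: "\<omega> \<in> paths S" and h: "tau D 2 \<omega> < \<infinity> \<and> stopped_value (tau D 2) \<omega> = y"
      using b(3) by auto
    obtain a where a: "first_is D a \<omega>" "first_is (D - {a}) y \<omega>" using h E_char[OF p fin] by blast
    have "a \<in> D" using a(1) unfolding first_is_def by simp
    then show "\<omega> \<in> (\<Union>a\<in>D. FI S D a \<inter> FI S (D - {a}) y)" using a p unfolding FI_def by blast
  next
    fix \<omega> assume "\<omega> \<in> (\<Union>a\<in>D. FI S D a \<inter> FI S (D - {a}) y)"
    then obtain a where p: "\<omega> \<in> paths S" and a: "first_is D a \<omega>" "first_is (D - {a}) y \<omega>"
      unfolding FI_def by blast
    have "tau D 2 \<omega> < \<infinity> \<and> stopped_value (tau D 2) \<omega> = y" using E_char[OF p fin] a by blast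
    then show "\<omega> \<in> {\<omega> \<in> space (P x). tau D 2 \<omega> < \<infinity> \<and> stopped_value (tau D 2) \<omega> = y}"
      using p b(3) by simp
  qed
  have m1: "(\<Union>a\<in>D. FI S D a \<inter> FI S (D - {a}) y) \<in> sets (P x)"
    unfolding b(2) using fin by (intro sets.finite_UN sets.Int FI_meas) auto
  have m2: "FI S (D - {x}) y \<in> sets (P x)" unfolding b(2) using fin by (intro FI_meas) auto
  have "AE \<omega> in P x. \<omega> \<in> (\<Union>a\<in>D. FI S D a \<inter> FI S (D - {a}) y) \<longleftrightarrow> \<omega> \<in> FI S (D - {x}) y"
    using b(4)
  proof eventually_elim
    case (elim \<omega>)
    show ?case using first_is_start[of \<omega> x D, OF elim x] x unfolding FI_def by auto
  qed
  then show ?thesis unfolding trans_prob_def e1 using m1 m2 by (rule measure_eq_AE)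
qed

lemma zero_diag: "FI S (D - {x}) x = {}"
  unfolding FI_def first_is_def by auto

lemma zero_far:
  assumes diff: "diffusion S P" and fin: "finite D" and x: "x \<in> D" and DS: "D \<subseteq> S"
    and w: "w \<in> D" "w \<noteq> x" and btw: "(x < w \<and> w < y) \<or> (y < w \<and> w < x)"
  shows "measure (P x) (FI S (D - {x}) y) = 0"
proof -
  have xS: "x \<in> S" using x DS by auto
  note b = diff_basic[OF diff xS]
  interpret Px: prob_space "P x" using b(1) .
  have "AE \<omega> in P x. \<omega> \<in> FI S (D - {x}) y \<longrightarrow> \<omega> \<in> {}"
    using b(4)
  proof eventually_elim
    case (elim \<omega>)
    show ?case
    proof
      assume "\<omega> \<in> FI S (D - {x}) y"
      then obtain \<tau> where p: "\<omega> \<in> paths S" and \<tau>: "0 \<le> \<tau>" "\<omega> \<tau> = y" "\<forall>u. 0 \<le> u \<longrightarrow> u < \<tau> \<longrightarrow> \<omega> u \<notin> D - {x}"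
        unfolding FI_def first_is_def by auto
      obtain u where "0 \<le> u" "u < \<tau>" "\<omega> u = w" using ivt_path[OF p \<tau>(1), of w] elim \<tau>(2) btw by auto
      then show "\<omega> \<in> {}" using \<tau>(3) w by auto
    qed
  qed
  then have "measure (P x) (FI S (D - {x}) y) \<le> measure (P x) {}"
    by (intro Px.finite_measure_mono_AE) auto
  then show ?thesis using measure_nonneg[of "P x" "FI S (D - {x}) y"] by simp
qed

lemma row_sum:
  assumes diff: "diffusion S P" and rec: "recurrent S P" and fin: "finite D" and DS: "D \<subseteq> S"
    and x: "x \<in> D" and y0: "y0 \<in> D" "y0 \<noteq> x"
  shows "(\<Sum>y\<in>D. measure (P x) (FI S (D - {x}) y)) = 1"
proof -
  have xS: "x \<in> S" using x DS by auto
  note b = diff_basic[OF diff xS]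
  interpret Px: prob_space "P x" using b(1) .
  have m: "FI S (D - {x}) y \<in> sets (P x)" for y unfolding b(2) using fin by (intro FI_meas) auto
  have disj: "disjoint_family_on (\<lambda>y. FI S (D - {x}) y) D"
    unfolding disjoint_family_on_def FI_def using first_is_unique by blast
  have "measure (P x) (\<Union>y\<in>D. FI S (D - {x}) y) = (\<Sum>y\<in>D. measure (P x) (FI S (D - {x}) y))"
    using fin m disj by (intro Px.finite_measure_finite_Union) auto
  moreover have "measure (P x) (\<Union>y\<in>D. FI S (D - {x}) y) = 1"
  proof -
    have um: "(\<Union>y\<in>D. FI S (D - {x}) y) \<in> sets (P x)" using fin m by auto
    have "AE \<omega> in P x. \<exists>t\<ge>0. \<omega> t = y0" using rec xS y0 DS unfolding recurrent_def by auto
    moreover have "AE \<omega> in P x. \<omega> \<in> paths S" using AE_space[of "P x"] b(3) by simp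
    ultimately have "AE \<omega> in P x. \<omega> \<in> (\<Union>y\<in>D. FI S (D - {x}) y)"
    proof eventually_elim
      case (elim \<omega>)
      then obtain t0 where t0: "0 \<le> t0" "\<omega> t0 = y0" by auto
      have cl: "closed (D - {x})" using fin by (intro finite_imp_closed) auto
      obtain \<tau> where \<tau>: "0 \<le> \<tau>" "\<omega> \<tau> \<in> D - {x}" "\<forall>u. 0 \<le> u \<longrightarrow> u < \<tau> \<longrightarrow> \<omega> u \<notin> D - {x}"
        using exists_first[OF elim(2) cl t0(1)] t0(2) y0 by auto
      have "\<omega> \<in> FI S (D - {x}) (\<omega> \<tau>)" unfolding FI_def first_is_def using elim(2) \<tau> by auto
      then show ?case using \<tau>(2) by auto
    qed
    then show ?thesis using Px.AE_in_set_eq_1[OF um] by simp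
  qed
  ultimately show ?thesis by simp
qed

lemma pos_interior:
  assumes diff: "diffusion S P" and rec: "recurrent S P" and fin: "finite D" and DS: "D \<subseteq> S"
    and x: "x \<in> D" and y: "y \<in> D" and z: "z \<in> D"
    and btw: "(z < x \<and> x < y) \<or> (y < x \<and> x < z)"
    and gap: "\<And>w. w \<in> D \<Longrightarrow> min y z < w \<Longrightarrow> w < max y z \<Longrightarrow> w = x"
  shows "0 < measure (P x) (FI S (D - {x}) y)"
proof -
  have xS: "x \<in> S" using x DS by auto
  note b = diff_basic[OF diff xS]
  interpret Px: prob_space "P x" using b(1) .
  have pos: "0 < measure (P x) (FI S {y,z} y)"
    using POS[OF diff rec, of y x z] x y z DS btw by auto
  have "AE \<omega> in P x. \<omega> \<in> FI S {y,z} y \<longrightarrow> \<omega> \<in> FI S (D - {x}) y"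
    using b(4)
  proof eventually_elim
    case (elim \<omega>)
    show ?case
    proof
      assume "\<omega> \<in> FI S {y,z} y"
      then obtain \<tau> where p: "\<omega> \<in> paths S" and \<tau>: "0 \<le> \<tau>" "\<omega> \<tau> = y" "\<forall>u. 0 \<le> u \<longrightarrow> u < \<tau> \<longrightarrow> \<omega> u \<notin> {y,z}"
        unfolding FI_def first_is_def by auto
      have "\<omega> u \<notin> D - {x}" if u: "0 \<le> u" "u < \<tau>" for u
      proof
        assume w: "\<omega> u \<in> D - {x}"
        have nyz: "\<omega> u \<noteq> y" "\<omega> u \<noteq> z" using \<tau>(3) u by auto
        have "\<not> (min y z < \<omega> u \<and> \<omega> u < max y z)" using gap[of "\<omega> u"] w by auto
        then have "\<exists>c\<in>{y,z}. (\<omega> 0 < c \<and> c < \<omega> u) \<or> (\<omega> u < c \<and> c < \<omega> 0)"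
          using nyz btw elim by (cases "y < z") (auto simp: min_def max_def)
        then obtain c where c: "c \<in> {y,z}" "(\<omega> 0 < c \<and> c < \<omega> u) \<or> (\<omega> u < c \<and> c < \<omega> 0)" by blast
        obtain u' where "0 \<le> u'" "u' < u" "\<omega> u' = c" using ivt_path[OF p u(1) c(2)] by blast
        then show False using \<tau>(3) u c(1) by auto
      qed
      moreover have "y \<in> D - {x}" using y btw by auto
      ultimately show "\<omega> \<in> FI S (D - {x}) y" unfolding FI_def first_is_def using p \<tau> by auto
    qed
  qed
  then have "measure (P x) (FI S {y,z} y) \<le> measure (P x) (FI S (D - {x}) y)"
    using fin b(2) by (intro Px.finite_measure_mono_AE) (auto intro: FI_meas)
  then show ?thesis using pos by simp
qed

lemma pos_boundary:
  assumes diff: "diffusion S P" and rec: "recurrent S P" and fin: "finite D" and DS: "D \<subseteq> S"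
    and x: "x \<in> D" and y: "y \<in> D" "y \<noteq> x"
    and side: "\<And>w. w \<in> D - {x} \<Longrightarrow> (x < y \<and> y \<le> w) \<or> (y < x \<and> w \<le> y)"
  shows "0 < measure (P x) (FI S (D - {x}) y)"
proof -
  have xS: "x \<in> S" using x DS by auto
  note b = diff_basic[OF diff xS]
  interpret Px: prob_space "P x" using b(1) .
  have m: "FI S (D - {x}) y \<in> sets (P x)" unfolding b(2) using fin by (intro FI_meas) auto
  have "AE \<omega> in P x. \<exists>t\<ge>0. \<omega> t = y" using rec xS y DS unfolding recurrent_def by auto
  moreover have "AE \<omega> in P x. \<omega> \<in> paths S" using AE_space[of "P x"] b(3) by simp
  ultimately have "AE \<omega> in P x. \<omega> \<in> FI S (D - {x}) y" using b(4)
  proof eventually_elim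
    case (elim \<omega>)
    then obtain t0 where t0: "0 \<le> t0" "\<omega> t0 = y" by auto
    have cl: "closed (D - {x})" using fin by (intro finite_imp_closed) auto
    obtain \<tau> where \<tau>: "0 \<le> \<tau>" "\<omega> \<tau> \<in> D - {x}" "\<forall>u. 0 \<le> u \<longrightarrow> u < \<tau> \<longrightarrow> \<omega> u \<notin> D - {x}"
      using exists_first[OF elim(2) cl t0(1)] t0(2) y by auto
    have "\<omega> \<tau> = y"
    proof (rule ccontr)
      assume ne: "\<omega> \<tau> \<noteq> y"
      have "(\<omega> 0 < y \<and> y < \<omega> \<tau>) \<or> (\<omega> \<tau> < y \<and> y < \<omega> 0)"
        using side[OF \<tau>(2)] ne elim(3) by auto
      then obtain u where "0 \<le> u" "u < \<tau>" "\<omega> u = y" using ivt_path[OF elim(2) \<tau>(1)] by blast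
      then show False using \<tau>(3) y by auto
    qed
    then show ?case unfolding FI_def first_is_def using elim(2) \<tau> by auto
  qed
  then have "measure (P x) (FI S (D - {x}) y) = 1" using Px.AE_in_set_eq_1[OF m] by simp
  then show ?thesis by simp
qed

theorem corollaryB6:
  fixes S :: "real set" and P :: "real \<Rightarrow> (real \<Rightarrow> real) measure"
    and s :: nat and d :: "nat \<Rightarrow> real"
  assumes S: "S = UNIV \<or> S = {0..} \<or> S = {0<..}"
    and diff: "diffusion S P"
    and rec: "recurrent S P"
    and s2: "2 \<le> s"
    and d_mono: "\<And>i j. 1 \<le> i \<Longrightarrow> i < j \<Longrightarrow> j \<le> s \<Longrightarrow> d i < d j"
    and d_in: "\<And>i. 1 \<le> i \<Longrightarrow> i \<le> s \<Longrightarrow> d i \<in> S"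
  defines "D \<equiv> d ` {1..s}"
    and "A \<equiv> mat s s (\<lambda>(i,j). trans_prob P (d ` {1..s}) (d (i+1)) (d (j+1)))"
  shows "\<exists>A1 A2 C1 C2.
           A1 \<in> carrier_mat ((s+1) div 2) ((s+1) div 2) \<and> A2 \<in> carrier_mat (s div 2) (s div 2) \<and>
           mat_tendsto (\<lambda>n. P_odd (A ^\<^sub>m (2*n))) A1 \<and>
           mat_tendsto (\<lambda>n. P_even (A ^\<^sub>m (2*n))) A2 \<and>
           stochastic_mat A1 \<and> stochastic_mat A2 \<and>
           C1 \<in> carrier_mat 1 ((s+1) div 2) \<and> C2 \<in> carrier_mat 1 (s div 2) \<and>
           (\<forall>j<(s+1) div 2. 0 < C1 $$ (0,j)) \<and> (\<forall>j<s div 2. 0 < C2 $$ (0,j)) \<and>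
           A1 = mat ((s+1) div 2) 1 (\<lambda>_. 1) * C1 \<and>
           A2 = mat (s div 2) 1 (\<lambda>_. 1) * C2"
proof -
  define E where "E = d ` {1..s}"
  have fin: "finite E" unfolding E_def by simp
  have ES: "E \<subseteq> S" unfolding E_def using d_in by auto
  have dlt: "d i < d j \<longleftrightarrow> i < j" if "1 \<le> i" "i \<le> s" "1 \<le> j" "j \<le> s" for i j
  proof
    assume "d i < d j"
    show "i < j"
    proof (rule ccontr)
      assume "\<not> i < j"
      then have "j = i \<or> j < i" by auto
      then show False using d_mono[of j i] that \<open>d i < d j\<close> by auto
    qed
  qed (use d_mono that in auto)
  have dle: "d i \<le> d j \<longleftrightarrow> i \<le> j" if "1 \<le> i" "i \<le> s" "1 \<le> j" "j \<le> s" for i j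
  proof -
    have "(\<not> d j < d i) \<longleftrightarrow> (\<not> j < i)" using dlt[of j i] that by simp
    then show ?thesis by (simp only: not_less)
  qed
  have deq: "d i = d j \<longleftrightarrow> i = j" if "1 \<le> i" "i \<le> s" "1 \<le> j" "j \<le> s" for i j
    using dle[OF that] dle[of j i] that by auto
  have inj: "inj_on d {1..s}" unfolding inj_on_def using deq by auto
  have dE: "d i \<in> E" if "1 \<le> i" "i \<le> s" for i unfolding E_def using that by auto
  have Aent: "A $$ (i,j) = measure (P (d (Suc i))) (FI S (E - {d (Suc i)}) (d (Suc j)))"
    if "i < s" "j < s" for i j
    unfolding A_def using that trans_FI[OF diff fin dE ES, of "Suc i" "d (Suc j)"]
    by (simp add: E_def)
  interpret T: tri A s
  proof
    show "A \<in> carrier_mat s s" unfolding A_def by simp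
    show "2 \<le> s" by (rule s2)
    show "0 \<le> A $$ (i,j)" if "i < s" "j < s" for i j using Aent[OF that] by simp
  next
    fix i assume i: "i < s"
    have "(\<Sum>j<s. A $$ (i,j)) = (\<Sum>j<s. measure (P (d (Suc i))) (FI S (E - {d (Suc i)}) (d (Suc j))))"
      using Aent i by simp
    also have "\<dots> = (\<Sum>k\<in>Suc ` {..<s}. measure (P (d (Suc i))) (FI S (E - {d (Suc i)}) (d k)))"
      by (simp add: sum.reindex)
    also have "Suc ` {..<s} = {1..s}" by (simp add: image_Suc_lessThan)
    also have "(\<Sum>k\<in>{1..s}. measure (P (d (Suc i))) (FI S (E - {d (Suc i)}) (d k)))
        = (\<Sum>y\<in>E. measure (P (d (Suc i))) (FI S (E - {d (Suc i)}) y))"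
      unfolding E_def using inj by (simp add: sum.reindex)
    also have "\<dots> = 1"
    proof (cases "Suc i = 1")
      case True
      then show ?thesis using i s2 deq[of 2 1]
        by (intro row_sum[OF diff rec fin ES, of _ "d 2"] dE) auto
    next
      case False
      then show ?thesis using i s2 deq[of 1 "Suc i"]
        by (intro row_sum[OF diff rec fin ES, of _ "d 1"] dE) auto
    qed
    finally show "(\<Sum>j<s. A $$ (i,j)) = 1" .
  next
    fix i j assume ij: "i < s" "j < s" and nz: "A $$ (i,j) \<noteq> 0"
    show "j = Suc i \<or> i = Suc j"
    proof (rule ccontr)
      assume c: "\<not> (j = Suc i \<or> i = Suc j)"
      have "A $$ (i,j) = 0"
      proof (cases "i = j")
        case True
        then show ?thesis using Aent[OF ij] by (simp add: zero_diag)
      next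
        case False
        then have "Suc i < j \<or> Suc j < i" using c by auto
        then show ?thesis
        proof
          assume h: "Suc i < j"
          show ?thesis unfolding Aent[OF ij]
            using h ij dlt[of "Suc i" "Suc (Suc i)"] dlt[of "Suc (Suc i)" "Suc j"] deq[of "Suc (Suc i)" "Suc i"]
            by (intro zero_far[OF diff fin dE ES, of _ "d (Suc (Suc i))"] dE) auto
        next
          assume h: "Suc j < i"
          show ?thesis unfolding Aent[OF ij]
            using h ij dlt[of "Suc j" i] dlt[of i "Suc i"] deq[of i "Suc i"]
            by (intro zero_far[OF diff fin dE ES, of _ "d i"] dE) auto
        qed
      qed
      then show False using nz by simp
    qed
  next
    fix i assume i: "Suc i < s"
    have i': "i < s" using i by simp
    show "0 < A $$ (i, Suc i)"
    proof (cases "i = 0")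
      case True
      have eq: "A $$ (i, Suc i) = measure (P (d (Suc 0))) (FI S (E - {d (Suc 0)}) (d (Suc (Suc 0))))"
        using Aent[OF i' i] True by simp
      show ?thesis unfolding eq using i True
      proof (intro pos_boundary[OF diff rec fin ES] dE)
        show "d (Suc (Suc 0)) \<noteq> d (Suc 0)" using deq[of "Suc (Suc 0)" "Suc 0"] i by auto
        fix w assume w: "w \<in> E - {d (Suc 0)}"
        then obtain l where l0: "1 \<le> l" "l \<le> s" "w = d l" unfolding E_def by auto
        then have l: "1 \<le> l" "l \<le> s" "w = d l" "l \<noteq> 1" using w by auto
        then show "(d (Suc 0) < d (Suc (Suc 0)) \<and> d (Suc (Suc 0)) \<le> w) \<or> (d (Suc (Suc 0)) < d (Suc 0) \<and> w \<le> d (Suc (Suc 0)))"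
          using dlt[of "Suc 0" "Suc (Suc 0)"] dle[of "Suc (Suc 0)" l] i by auto
      qed auto
    next
      case False
      show ?thesis unfolding Aent[OF i' i] using i False
      proof (intro pos_interior[OF diff rec fin ES, of _ _ "d i"] dE)
        show "(d i < d (Suc i) \<and> d (Suc i) < d (Suc (Suc i))) \<or> (d (Suc (Suc i)) < d (Suc i) \<and> d (Suc i) < d i)"
          using dlt[of i "Suc i"] dlt[of "Suc i" "Suc (Suc i)"] i False by auto
        fix w assume w: "w \<in> E" "min (d (Suc (Suc i))) (d i) < w" "w < max (d (Suc (Suc i))) (d i)"
        then obtain l where l: "1 \<le> l" "l \<le> s" "w = d l" unfolding E_def by auto
        have "d i < d (Suc (Suc i))" using dlt[of i "Suc (Suc i)"] i False by auto
        then have "i < l" "l < Suc (Suc i)" using w l dlt[of i l] dlt[of l "Suc (Suc i)"] i False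
          by (auto simp: min_def max_def)
        then show "w = d (Suc i)" using l by (simp add: le_antisym less_Suc_eq)
      qed auto
    qed
  next
    fix i assume i: "Suc i < s"
    have i': "i < s" using i by simp
    show "0 < A $$ (Suc i, i)"
    proof (cases "Suc (Suc i) = s")
      case True
      show ?thesis unfolding Aent[OF i i'] using i True
      proof (intro pos_boundary[OF diff rec fin ES] dE)
        show "d (Suc i) \<noteq> d (Suc (Suc i))" using deq[of "Suc i" "Suc (Suc i)"] i by auto
        fix w assume "w \<in> E - {d (Suc (Suc i))}"
        then obtain l where l0: "1 \<le> l" "l \<le> s" "w = d l" unfolding E_def by auto
        then have l: "1 \<le> l" "l \<le> s" "w = d l" "l \<noteq> Suc (Suc i)" using \<open>w \<in> E - {d (Suc (Suc i))}\<close> by auto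
        then show "(d (Suc (Suc i)) < d (Suc i) \<and> d (Suc i) \<le> w) \<or> (d (Suc i) < d (Suc (Suc i)) \<and> w \<le> d (Suc i))"
          using dlt[of "Suc i" "Suc (Suc i)"] dle[of l "Suc i"] i True by auto
      qed auto
    next
      case False
      show ?thesis unfolding Aent[OF i i'] using i False
      proof (intro pos_interior[OF diff rec fin ES, of _ _ "d (Suc (Suc (Suc i)))"] dE)
        show "(d (Suc (Suc (Suc i))) < d (Suc (Suc i)) \<and> d (Suc (Suc i)) < d (Suc i)) \<or> (d (Suc i) < d (Suc (Suc i)) \<and> d (Suc (Suc i)) < d (Suc (Suc (Suc i))))"
          using dlt[of "Suc i" "Suc (Suc i)"] dlt[of "Suc (Suc i)" "Suc (Suc (Suc i))"] i False by auto
        fix w assume w: "w \<in> E" "min (d (Suc i)) (d (Suc (Suc (Suc i)))) < w" "w < max (d (Suc i)) (d (Suc (Suc (Suc i))))"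
        then obtain l where l: "1 \<le> l" "l \<le> s" "w = d l" unfolding E_def by auto
        have "d (Suc i) < d (Suc (Suc (Suc i)))" using dlt[of "Suc i" "Suc (Suc (Suc i))"] i False by auto
        then have "Suc i < l" "l < Suc (Suc (Suc i))" using w l dlt[of "Suc i" l] dlt[of l "Suc (Suc (Suc i))"] i False
          by (auto simp: min_def max_def)
        then show "w = d (Suc (Suc i))" using l by (simp add: le_antisym less_Suc_eq)
      qed auto
    qed
  qed
  show ?thesis by (rule T.final)
qed

end
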